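(* Let $W:[0,1]^2\to[0,1]$ be a symmetric graphon that is $L$-Lipschitz: $|W(x,y)-W(x',y')|\le L(|x-x'|+|y-y'|)$ for all $(x,y),(x',y')\in[0,1]^2$. Fix $\alpha>1$ and a real polynomial $f$. For each $n\ge1$ let $d=d(n)$ be a positive integer with $d^{1/\alpha}\le n\le d^{\alpha}$, let $G_n\sim\mathcal{G}_W(n)$, and let $X_0^{(n)}\in\mathbb{R}^{n\times d(n)}$ be the Gaussian initialization, independent of $G_n$, all defined on a common probability space. Let $X^{(n)}=f(\mathcal{L}_n)X_0^{(n)}$ and $h_{G_n}=\frac1n\operatorname{Tr}(\mathcal{L}_nX^{(n)}X^{(n)\top})$. Then, almost surely, $$h_{G_n}\xrightarrow[n\to\infty]{}\int_0^1\delta(x)\,f(\delta(x))^2\,dx,$$ where $\delta(x)=\int_0^1W(x,y)\,dy$.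
   Context: A graphon is a symmetric measurable $W:[0,1]^2\to[0,1]$. The random graph $G_n\sim\mathcal{G}_W(n)$ is sampled by drawing $u_1,\dots,u_n\sim\mathrm{Unif}[0,1]$ i.i.d. and then, independently for each pair $i<j$, putting an undirected edge $\{i,j\}$ with probability $W(u_i,u_j)$ (no self-loops). For such a graph with adjacency matrix $\mathbf{A}_n$ and degree matrix $\mathbf{D}_n$, $\mathbf{L}_n=\mathbf{D}_n-\mathbf{A}_n$ and $\mathcal{L}_n=\mathbf{L}_n/n$. Gaussian initialization: $e_1,\dots,e_n\sim\mathcal{N}(0,I_d)$ i.i.d. and $X_0=\frac1{\sqrt d}[e_1,\dots,e_n]^\top\in\mathbb{R}^{n\times d}$. For a polynomial $f(t)=\sum_k a_kt^k$, $f(\mathcal{L}_n)=\sum_ka_k\mathcal{L}_n^k$. The degree function of $W$ is $\delta(x)=\int_0^1W(x,y)\,dy$. *)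

theory Defs
  imports "HOL-Probability.Probability" "HOL-Computational_Algebra.Polynomial"
begin

text \<open>Matrices are represented as functions nat => nat => real; dimensions are explicit.\<close>

definition mmul :: "nat \<Rightarrow> (nat \<Rightarrow> nat \<Rightarrow> real) \<Rightarrow> (nat \<Rightarrow> nat \<Rightarrow> real) \<Rightarrow> (nat \<Rightarrow> nat \<Rightarrow> real)" where
  "mmul m A B = (\<lambda>i j. \<Sum>k<m. A i k * B k j)"

definition mtranspose :: "(nat \<Rightarrow> nat \<Rightarrow> real) \<Rightarrow> (nat \<Rightarrow> nat \<Rightarrow> real)" where
  "mtranspose A = (\<lambda>i j. A j i)"

definition mtrace :: "nat \<Rightarrow> (nat \<Rightarrow> nat \<Rightarrow> real) \<Rightarrow> real" where
  "mtrace n A = (\<Sum>i<n. A i i)"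

primrec mpow :: "nat \<Rightarrow> (nat \<Rightarrow> nat \<Rightarrow> real) \<Rightarrow> nat \<Rightarrow> (nat \<Rightarrow> nat \<Rightarrow> real)" where
  "mpow n A 0 = (\<lambda>i j. if i = j then 1 else 0)"
| "mpow n A (Suc k) = mmul n A (mpow n A k)"

definition poly_mat :: "nat \<Rightarrow> real poly \<Rightarrow> (nat \<Rightarrow> nat \<Rightarrow> real) \<Rightarrow> (nat \<Rightarrow> nat \<Rightarrow> real)" where
  "poly_mat n f A = (\<lambda>i j. \<Sum>k\<le>degree f. coeff f k * mpow n A k i j)"

text \<open>A graph on vertices 0..n-1 is given by its edge indicator on pairs (i,j) with i < j.\<close>
definition adj :: "(nat \<times> nat \<Rightarrow> bool) \<Rightarrow> nat \<Rightarrow> nat \<Rightarrow> real" where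
  "adj G i j = (if i < j then (if G (i, j) then 1 else 0)
                else if j < i then (if G (j, i) then 1 else 0) else 0)"

text \<open>Normalized Laplacian L_n / n = (D_n - A_n) / n.\<close>
definition norm_lap :: "nat \<Rightarrow> (nat \<times> nat \<Rightarrow> bool) \<Rightarrow> nat \<Rightarrow> nat \<Rightarrow> real" where
  "norm_lap n G = (\<lambda>i j. ((if i = j then (\<Sum>l<n. adj G i l) else 0) - adj G i j) / real n)"

text \<open>Gaussian initialization X_0 = d^(-1/2) [e_1,...,e_n]^T with e_i(k) = Z (i,k).\<close>
definition gauss_init :: "nat \<Rightarrow> (nat \<times> nat \<Rightarrow> real) \<Rightarrow> nat \<Rightarrow> nat \<Rightarrow> real" where
  "gauss_init d Z = (\<lambda>i k. Z (i, k) / sqrt (real d))"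

definition h_stat :: "nat \<Rightarrow> nat \<Rightarrow> real poly \<Rightarrow> (nat \<times> nat \<Rightarrow> bool) \<Rightarrow> (nat \<times> nat \<Rightarrow> real) \<Rightarrow> real" where
  "h_stat n d f G Z =
     (let L = norm_lap n G;
          X = mmul n (poly_mat n f L) (gauss_init d Z)
      in mtrace n (mmul n L (mmul d X (mtranspose X))) / real n)"

definition graphon_law :: "(real \<Rightarrow> real \<Rightarrow> real) \<Rightarrow> nat \<Rightarrow> (nat \<times> nat \<Rightarrow> bool) measure" where
  "graphon_law W n =
     bind (PiM {..<n} (\<lambda>_. uniform_measure lborel {0..1::real}))
          (\<lambda>u. PiM {(i, j). i < j \<and> j < n}
                 (\<lambda>p. measure_pmf (bernoulli_pmf (W (u (fst p)) (u (snd p))))))"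

definition gauss_law :: "nat \<Rightarrow> nat \<Rightarrow> (nat \<times> nat \<Rightarrow> real) measure" where
  "gauss_law n d = PiM ({..<n} \<times> {..<d}) (\<lambda>_. density lborel std_normal_density)"

definition sample_law :: "(real \<Rightarrow> real \<Rightarrow> real) \<Rightarrow> nat \<Rightarrow> nat \<Rightarrow> ((nat \<times> nat \<Rightarrow> bool) \<times> (nat \<times> nat \<Rightarrow> real)) measure" where
  "sample_law W n d = graphon_law W n \<Otimes>\<^sub>M gauss_law n d"

definition graphon_degree :: "(real \<Rightarrow> real \<Rightarrow> real) \<Rightarrow> real \<Rightarrow> real" where
  "graphon_degree W x = (LBINT y=0..1. W x y)"

end

theory Submission
  imports Defs "HOL-Real_Asymp.Real_Asymp"
begin

definition bnd :: "nat \<Rightarrow> real \<Rightarrow> (nat \<Rightarrow> nat \<Rightarrow> real) \<Rightarrow> bool" where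
  "bnd n r A \<longleftrightarrow> (\<forall>i<n. (\<Sum>j<n. \<bar>A i j\<bar>) \<le> r) \<and> (\<forall>j<n. (\<Sum>i<n. \<bar>A i j\<bar>) \<le> r)"

lemma bnd_nonneg: "bnd n r A \<Longrightarrow> n > 0 \<Longrightarrow> r \<ge> 0"
  unfolding bnd_def by (meson order.trans sum_nonneg abs_ge_zero)

lemma mmul_assoc: "mmul n (mmul n A B) C = mmul n A (mmul n B C)"
  unfolding mmul_def by (auto simp: sum_distrib_left sum_distrib_right mult.assoc intro!: ext sum.swap[THEN trans])

lemma bnd_mmul:
  assumes A: "bnd n r A" and B: "bnd n s B"
  shows "bnd n (r * s) (mmul n A B)"
proof (cases "n = 0")
  case True then show ?thesis by (simp add: bnd_def)
next
  case False
  then have r0: "r \<ge> 0" and s0: "s \<ge> 0" using bnd_nonneg A B by auto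
  have row: "(\<Sum>j<n. \<bar>mmul n A B i j\<bar>) \<le> r * s" if i: "i < n" for i
  proof -
    have "(\<Sum>j<n. \<bar>mmul n A B i j\<bar>) \<le> (\<Sum>j<n. \<Sum>k<n. \<bar>A i k\<bar> * \<bar>B k j\<bar>)"
      unfolding mmul_def by (intro sum_mono) (auto intro: order.trans[OF sum_abs] simp: abs_mult)
    also have "\<dots> = (\<Sum>k<n. \<bar>A i k\<bar> * (\<Sum>j<n. \<bar>B k j\<bar>))"
      by (subst sum.swap) (simp add: sum_distrib_left)
    also have "\<dots> \<le> (\<Sum>k<n. \<bar>A i k\<bar> * s)"
      using B by (intro sum_mono mult_left_mono) (auto simp: bnd_def)
    also have "\<dots> = (\<Sum>k<n. \<bar>A i k\<bar>) * s" by (simp add: sum_distrib_right)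
    also have "\<dots> \<le> r * s" using A i s0 by (intro mult_right_mono) (auto simp: bnd_def)
    finally show ?thesis .
  qed
  have col: "(\<Sum>i<n. \<bar>mmul n A B i j\<bar>) \<le> r * s" if j: "j < n" for j
  proof -
    have "(\<Sum>i<n. \<bar>mmul n A B i j\<bar>) \<le> (\<Sum>i<n. \<Sum>k<n. \<bar>A i k\<bar> * \<bar>B k j\<bar>)"
      unfolding mmul_def by (intro sum_mono) (auto intro: order.trans[OF sum_abs] simp: abs_mult)
    also have "\<dots> = (\<Sum>k<n. (\<Sum>i<n. \<bar>A i k\<bar>) * \<bar>B k j\<bar>)"
      by (subst sum.swap) (simp add: sum_distrib_right)
    also have "\<dots> \<le> (\<Sum>k<n. r * \<bar>B k j\<bar>)"
      using A by (intro sum_mono mult_right_mono) (auto simp: bnd_def)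
    also have "\<dots> = r * (\<Sum>k<n. \<bar>B k j\<bar>)" by (simp add: sum_distrib_left)
    also have "\<dots> \<le> r * s" using B j r0 by (intro mult_left_mono) (auto simp: bnd_def)
    finally show ?thesis .
  qed
  show ?thesis using row col by (auto simp: bnd_def)
qed

lemma bnd_id: "bnd n 1 (\<lambda>i j. if i = j then 1 else 0)"
  by (auto simp: bnd_def if_distrib[where f=abs] sum.delta cong: if_cong)

lemma bnd_mono: "bnd n r A \<Longrightarrow> r \<le> s \<Longrightarrow> bnd n s A"
  by (auto simp: bnd_def intro: order.trans)

lemma bnd_mpow: "bnd n r A \<Longrightarrow> bnd n (r ^ k) (mpow n A k)"
  by (induction k) (auto simp: bnd_id intro: bnd_mmul)

lemma bnd_transpose: "bnd n r A \<Longrightarrow> bnd n r (mtranspose A)"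
  by (auto simp: bnd_def mtranspose_def)

lemma bnd_lincomb:
  assumes "\<And>k. k \<in> K \<Longrightarrow> bnd n (r k) (A k)" "finite K"
  shows "bnd n (\<Sum>k\<in>K. \<bar>c k\<bar> * r k) (\<lambda>i j. \<Sum>k\<in>K. c k * A k i j)"
proof -
  have row: "(\<Sum>j<n. \<bar>\<Sum>k\<in>K. c k * A k i j\<bar>) \<le> (\<Sum>k\<in>K. \<bar>c k\<bar> * r k)" if "i < n" for i
  proof -
    have "(\<Sum>j<n. \<bar>\<Sum>k\<in>K. c k * A k i j\<bar>) \<le> (\<Sum>j<n. \<Sum>k\<in>K. \<bar>c k\<bar> * \<bar>A k i j\<bar>)"
      by (intro sum_mono) (auto intro: order.trans[OF sum_abs] simp: abs_mult)
    also have "\<dots> = (\<Sum>k\<in>K. \<bar>c k\<bar> * (\<Sum>j<n. \<bar>A k i j\<bar>))"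
      by (subst sum.swap) (simp add: sum_distrib_left)
    also have "\<dots> \<le> (\<Sum>k\<in>K. \<bar>c k\<bar> * r k)"
      using assms that by (intro sum_mono mult_left_mono) (auto simp: bnd_def)
    finally show ?thesis .
  qed
  have col: "(\<Sum>i<n. \<bar>\<Sum>k\<in>K. c k * A k i j\<bar>) \<le> (\<Sum>k\<in>K. \<bar>c k\<bar> * r k)" if "j < n" for j
  proof -
    have "(\<Sum>i<n. \<bar>\<Sum>k\<in>K. c k * A k i j\<bar>) \<le> (\<Sum>i<n. \<Sum>k\<in>K. \<bar>c k\<bar> * \<bar>A k i j\<bar>)"
      by (intro sum_mono) (auto intro: order.trans[OF sum_abs] simp: abs_mult)
    also have "\<dots> = (\<Sum>k\<in>K. \<bar>c k\<bar> * (\<Sum>i<n. \<bar>A k i j\<bar>))"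
      by (subst sum.swap) (simp add: sum_distrib_left)
    also have "\<dots> \<le> (\<Sum>k\<in>K. \<bar>c k\<bar> * r k)"
      using assms that by (intro sum_mono mult_left_mono) (auto simp: bnd_def)
    finally show ?thesis .
  qed
  show ?thesis using row col by (auto simp: bnd_def)
qed

definition pbound :: "real poly \<Rightarrow> real \<Rightarrow> real" where
  "pbound f r = (\<Sum>k\<le>degree f. \<bar>coeff f k\<bar> * r ^ k)"

lemma bnd_poly_mat: "bnd n r A \<Longrightarrow> bnd n (pbound f r) (poly_mat n f A)"
  unfolding poly_mat_def pbound_def by (intro bnd_lincomb bnd_mpow) auto

lemma pbound_nonneg: "r \<ge> 0 \<Longrightarrow> pbound f r \<ge> 0"
  unfolding pbound_def by (intro sum_nonneg) auto

lemma mpow_add: "i < n \<Longrightarrow> mmul n (mpow n A a) (mpow n A b) i j = mpow n A (a + b) i j"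
proof (induction a arbitrary: i)
  case 0
  then show ?case by (simp add: mmul_def if_distrib[where f="\<lambda>x. x * _"] sum.delta cong: if_cong)
next
  case (Suc a)
  have "mmul n (mpow n A (Suc a)) (mpow n A b) i j = mmul n A (mmul n (mpow n A a) (mpow n A b)) i j"
    by (simp add: mmul_assoc)
  also have "\<dots> = (\<Sum>l<n. A i l * mpow n A (a + b) l j)"
    unfolding mmul_def[of n A] using Suc.IH by (intro sum.cong) auto
  finally show ?case by (simp add: mmul_def)
qed

lemma mpow_1: "i < n \<Longrightarrow> j < n \<Longrightarrow> mpow n A 1 i j = A i j"
  by (simp add: mmul_def if_distrib[where f="\<lambda>x. _ * x"] sum.delta' cong: if_cong)

lemma mpow_sym:
  assumes sym: "\<And>i j. i < n \<Longrightarrow> j < n \<Longrightarrow> A i j = A j i"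
  shows "i < n \<Longrightarrow> j < n \<Longrightarrow> mpow n A m i j = mpow n A m j i"
proof (induction m arbitrary: i j)
  case 0 then show ?case by simp
next
  case (Suc m)
  have "mpow n A (Suc m) i j = (\<Sum>l<n. A i l * mpow n A m l j)" by (simp add: mmul_def)
  also have "\<dots> = (\<Sum>l<n. mpow n A m j l * mpow n A 1 l i)"
  proof (intro sum.cong refl)
    fix l assume "l \<in> {..<n}"
    then show "A i l * mpow n A m l j = mpow n A m j l * mpow n A 1 l i"
      using Suc mpow_1[of l n i A] sym[of i l] by (simp del: mpow.simps)
  qed
  also have "\<dots> = mpow n A (m + 1) j i"
    using mpow_add[of j n A m 1 i] Suc by (simp add: mmul_def)
  finally show ?case by simp
qed

lemma mpow_diag:
  assumes "i < n"
  shows "mpow n (\<lambda>i j. if i = j then v i else 0) m i j = (if i = j then v i ^ m else 0)"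
  using assms
proof (induction m arbitrary: i)
  case 0 then show ?case by simp
next
  case (Suc m)
  have "mpow n (\<lambda>i j. if i = j then v i else 0) (Suc m) i j =
        (\<Sum>l<n. (if i = l then v i else 0) * mpow n (\<lambda>i j. if i = j then v i else 0) m l j)"
    by (simp add: mmul_def)
  also have "\<dots> = v i * mpow n (\<lambda>i j. if i = j then v i else 0) m i j"
    using Suc.prems by (simp add: if_distrib[where f="\<lambda>x. x * _"] sum.delta cong: if_cong)
  finally show ?case using Suc by simp
qed


definition deg :: "nat \<Rightarrow> (nat \<times> nat \<Rightarrow> bool) \<Rightarrow> nat \<Rightarrow> real" where
  "deg n G i = (\<Sum>l<n. adj G i l)"

definition Dg :: "nat \<Rightarrow> (nat \<times> nat \<Rightarrow> bool) \<Rightarrow> nat \<Rightarrow> nat \<Rightarrow> real" where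
  "Dg n G = (\<lambda>i j. if i = j then deg n G i / real n else 0)"

definition Eg :: "nat \<Rightarrow> (nat \<times> nat \<Rightarrow> bool) \<Rightarrow> nat \<Rightarrow> nat \<Rightarrow> real" where
  "Eg n G = (\<lambda>i j. - adj G i j / real n)"

lemma adj_01: "adj G i j = 0 \<or> adj G i j = 1"
  by (auto simp: adj_def)

lemma adj_nonneg: "adj G i j \<ge> 0" and adj_le1: "adj G i j \<le> 1"
  by (auto simp: adj_def)

lemma adj_diag[simp]: "adj G i i = 0"
  by (simp add: adj_def)

lemma adj_sym: "adj G i j = adj G j i"
  by (auto simp: adj_def)

lemma deg_nonneg: "deg n G i \<ge> 0"
  unfolding deg_def by (intro sum_nonneg adj_nonneg)

lemma deg_le: "deg n G i \<le> real n"
proof -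
  have "deg n G i \<le> (\<Sum>l<n. 1)" unfolding deg_def by (intro sum_mono adj_le1)
  then show ?thesis by simp
qed

lemma norm_lap_split: "norm_lap n G i j = Dg n G i j + Eg n G i j"
  by (simp add: norm_lap_def Dg_def Eg_def deg_def diff_divide_distrib)

lemma norm_lap_sym: "norm_lap n G i j = norm_lap n G j i"
  by (simp add: norm_lap_def adj_sym)

lemma abs_Eg: "\<bar>Eg n G i j\<bar> \<le> 1 / real n"
  using adj_01[of G i j] by (auto simp: Eg_def)

lemma bnd_Dg: "bnd n 1 (Dg n G)"
proof -
  have "(\<Sum>j<n. \<bar>Dg n G i j\<bar>) \<le> 1" "(\<Sum>j<n. \<bar>Dg n G j i\<bar>) \<le> 1" if "i < n" for i
  proof -
    have "(\<Sum>j<n. \<bar>Dg n G i j\<bar>) = deg n G i / real n" "(\<Sum>j<n. \<bar>Dg n G j i\<bar>) = deg n G i / real n"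
      using that deg_nonneg[of n G i]
      by (simp_all add: Dg_def if_distrib[where f=abs] sum.delta sum.delta' cong: if_cong)
    moreover have "deg n G i / real n \<le> 1"
      using deg_le[of n G i] that by (simp add: divide_le_eq_1)
    ultimately show "(\<Sum>j<n. \<bar>Dg n G i j\<bar>) \<le> 1" "(\<Sum>j<n. \<bar>Dg n G j i\<bar>) \<le> 1" by simp_all
  qed
  then show ?thesis by (auto simp: bnd_def)
qed

lemma bnd_norm_lap: "bnd n 2 (norm_lap n G)"
proof -
  have row: "(\<Sum>j<n. \<bar>norm_lap n G i j\<bar>) \<le> 2" if "i < n" for i
  proof -
    have "(\<Sum>j<n. \<bar>norm_lap n G i j\<bar>) \<le> (\<Sum>j<n. \<bar>Dg n G i j\<bar> + \<bar>Eg n G i j\<bar>)"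
      by (intro sum_mono) (simp add: norm_lap_split abs_triangle_ineq)
    also have "\<dots> = (\<Sum>j<n. \<bar>Dg n G i j\<bar>) + (\<Sum>j<n. \<bar>Eg n G i j\<bar>)" by (simp add: sum.distrib)
    also have "(\<Sum>j<n. \<bar>Eg n G i j\<bar>) = deg n G i / real n"
      by (simp add: Eg_def deg_def sum_divide_distrib adj_nonneg)
    also have "deg n G i / real n \<le> 1"
      using deg_le[of n G i] that by (simp add: divide_le_eq_1)
    finally show ?thesis using bnd_Dg[of n G] that by (auto simp: bnd_def)
  qed
  show ?thesis using row by (auto simp: bnd_def norm_lap_sym)
qed

lemma mtrace_id_mul: "mtrace n (mmul n (\<lambda>i j. if i = j then 1 else 0) P) = mtrace n P"
  by (simp add: mtrace_def mmul_def if_distrib[where f="\<lambda>x. x * _"] sum.delta cong: if_cong)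

lemma trace_E_bound:
  assumes Y: "bnd n r Y" and P: "bnd n q P" and E: "\<And>a b. a < n \<Longrightarrow> b < n \<Longrightarrow> \<bar>E a b\<bar> \<le> e"
  shows "\<bar>mtrace n (mmul n (mmul n Y E) P)\<bar> \<le> real n * e * r * q"
proof (cases "n = 0")
  case True then show ?thesis by (simp add: mtrace_def)
next
  case False
  then have r0: "r \<ge> 0" and q0: "q \<ge> 0" using bnd_nonneg Y P by auto
  have e0: "e \<ge> 0" using E[of 0 0] False by linarith
  have "\<bar>mtrace n (mmul n (mmul n Y E) P)\<bar> \<le> (\<Sum>i<n. \<Sum>b<n. \<Sum>a<n. \<bar>Y i a\<bar> * e * \<bar>P b i\<bar>)"
    unfolding mtrace_def mmul_def
  proof (rule order.trans[OF sum_abs], intro sum_mono)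
    fix i assume "i \<in> {..<n}"
    show "\<bar>\<Sum>b<n. (\<Sum>a<n. Y i a * E a b) * P b i\<bar> \<le> (\<Sum>b<n. \<Sum>a<n. \<bar>Y i a\<bar> * e * \<bar>P b i\<bar>)"
    proof (rule order.trans[OF sum_abs], intro sum_mono)
      fix b assume b: "b \<in> {..<n}"
      have "\<bar>(\<Sum>a<n. Y i a * E a b) * P b i\<bar> = \<bar>\<Sum>a<n. Y i a * E a b * P b i\<bar>"
        by (simp add: sum_distrib_right)
      also have "\<dots> \<le> (\<Sum>a<n. \<bar>Y i a * E a b * P b i\<bar>)" by (rule sum_abs)
      also have "\<dots> \<le> (\<Sum>a<n. \<bar>Y i a\<bar> * e * \<bar>P b i\<bar>)"
        using E b by (intro sum_mono) (auto simp: abs_mult intro!: mult_right_mono mult_left_mono)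
      finally show "\<bar>(\<Sum>a<n. Y i a * E a b) * P b i\<bar> \<le> (\<Sum>a<n. \<bar>Y i a\<bar> * e * \<bar>P b i\<bar>)" .
    qed
  qed
  also have "\<dots> = (\<Sum>i<n. e * ((\<Sum>a<n. \<bar>Y i a\<bar>) * (\<Sum>b<n. \<bar>P b i\<bar>)))"
  proof (intro sum.cong refl)
    fix i
    have "(\<Sum>b<n. \<Sum>a<n. \<bar>Y i a\<bar> * e * \<bar>P b i\<bar>) = (\<Sum>a<n. \<Sum>b<n. \<bar>Y i a\<bar> * e * \<bar>P b i\<bar>)"
      by (rule sum.swap)
    then show "(\<Sum>b<n. \<Sum>a<n. \<bar>Y i a\<bar> * e * \<bar>P b i\<bar>) = e * ((\<Sum>a<n. \<bar>Y i a\<bar>) * (\<Sum>b<n. \<bar>P b i\<bar>))"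
      by (simp add: sum_product sum_distrib_left mult_ac)
  qed
  also have "\<dots> \<le> (\<Sum>i<n. e * (r * q))"
    using Y P e0 r0 q0 by (intro sum_mono mult_left_mono mult_mono) (auto simp: bnd_def intro: sum_nonneg)
  finally show ?thesis by (simp add: mult_ac)
qed

lemma mmul_add_left: "mmul n (\<lambda>i j. A i j + B i j) C = (\<lambda>i j. mmul n A C i j + mmul n B C i j)"
  by (simp add: mmul_def distrib_right sum.distrib)

lemma mtrace_add: "mtrace n (\<lambda>i j. A i j + B i j) = mtrace n A + mtrace n B"
  by (simp add: mtrace_def sum.distrib)

lemma trace_approx:
  assumes Y: "bnd n s Y" and s0: "s \<ge> 0"
  shows "\<bar>mtrace n (mmul n Y (mpow n (norm_lap n G) m)) - mtrace n (mmul n Y (mpow n (Dg n G) m))\<bar>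
           \<le> s * real m * 2 ^ m"
  using Y s0
proof (induction m arbitrary: Y s)
  case 0 then show ?case by simp
next
  case (Suc m)
  show ?case
  proof (cases "n = 0")
    case True then show ?thesis using Suc.prems by (simp add: mtrace_def)
  next
    case False
    have s0: "s \<ge> 0" using Suc.prems by auto
    let ?L = "norm_lap n G" and ?D = "Dg n G" and ?E = "Eg n G"
    have YD: "bnd n s (mmul n Y ?D)" using bnd_mmul[OF Suc.prems(1) bnd_Dg] by simp
    have "mmul n Y ?L = (\<lambda>i j. mmul n Y ?D i j + mmul n Y ?E i j)"
      by (simp add: mmul_def norm_lap_split distrib_left sum.distrib)
    then have eq1: "mtrace n (mmul n Y (mpow n ?L (Suc m))) =
        mtrace n (mmul n (mmul n Y ?D) (mpow n ?L m)) + mtrace n (mmul n (mmul n Y ?E) (mpow n ?L m))"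
      by (simp add: mmul_assoc[symmetric] mmul_add_left mtrace_add)
    have eq2: "mtrace n (mmul n Y (mpow n ?D (Suc m))) = mtrace n (mmul n (mmul n Y ?D) (mpow n ?D m))"
      by (simp add: mmul_assoc)
    have b1: "\<bar>mtrace n (mmul n (mmul n Y ?D) (mpow n ?L m)) - mtrace n (mmul n (mmul n Y ?D) (mpow n ?D m))\<bar>
              \<le> s * real m * 2 ^ m" using Suc.IH[OF YD s0] .
    have b2: "\<bar>mtrace n (mmul n (mmul n Y ?E) (mpow n ?L m))\<bar> \<le> real n * (1 / real n) * s * 2 ^ m"
      by (rule trace_E_bound[OF Suc.prems(1) bnd_mpow[OF bnd_norm_lap]]) (rule abs_Eg)
    have "real n * (1 / real n) * s * 2 ^ m = s * 2 ^ m" using False by simp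
    with b1 b2 have "\<bar>mtrace n (mmul n Y (mpow n ?L (Suc m))) - mtrace n (mmul n Y (mpow n ?D (Suc m)))\<bar>
       \<le> s * real m * 2 ^ m + s * 2 ^ m"
      unfolding eq1 eq2 by linarith
    also have "\<dots> \<le> s * real (Suc m) * 2 ^ Suc m"
      using s0 by (simp add: algebra_simps)
    finally show ?thesis .
  qed
qed

lemma trace_approx1:
  "\<bar>mtrace n (mpow n (norm_lap n G) m) - mtrace n (mpow n (Dg n G) m)\<bar> \<le> real m * 2 ^ m"
  using trace_approx[OF bnd_id zero_le_one, of n G m] by (simp add: mtrace_id_mul)

lemma mtrace_Dg_pow: "mtrace n (mpow n (Dg n G) m) = (\<Sum>i<n. (deg n G i / real n) ^ m)"
  unfolding mtrace_def Dg_def by (intro sum.cong refl) (subst mpow_diag, auto)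

lemma mmul_lincomb_right:
  "mmul n A (\<lambda>i j. \<Sum>k\<in>K. c k * B k i j) = (\<lambda>i j. \<Sum>k\<in>K. c k * mmul n A (B k) i j)"
  by (auto simp: mmul_def sum_distrib_left mult_ac intro!: ext sum.swap[THEN trans])

definition phi :: "real poly \<Rightarrow> real \<Rightarrow> real" where
  "phi f x = x * (poly f x)\<^sup>2"

lemma phi_expand: "phi f x = (\<Sum>p\<le>degree f. \<Sum>q\<le>degree f. coeff f p * coeff f q * x ^ (p + q + 1))"
  unfolding phi_def power2_eq_square poly_altdef
  by (simp add: sum_distrib_left sum_distrib_right power_add mult_ac)

lemma sum_swap4:
  "(\<Sum>i\<in>A. \<Sum>a\<in>B. \<Sum>p\<in>C. \<Sum>q\<in>D. X i a p q) = (\<Sum>p\<in>C. \<Sum>q\<in>D. \<Sum>i\<in>A. \<Sum>a\<in>B. X i a p q)"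
proof -
  have "(\<Sum>i\<in>A. \<Sum>a\<in>B. \<Sum>p\<in>C. \<Sum>q\<in>D. X i a p q) = (\<Sum>i\<in>A. \<Sum>p\<in>C. \<Sum>a\<in>B. \<Sum>q\<in>D. X i a p q)"
    by (rule sum.cong[OF refl], rule sum.swap)
  also have "\<dots> = (\<Sum>p\<in>C. \<Sum>i\<in>A. \<Sum>a\<in>B. \<Sum>q\<in>D. X i a p q)" by (rule sum.swap)
  also have "\<dots> = (\<Sum>p\<in>C. \<Sum>i\<in>A. \<Sum>q\<in>D. \<Sum>a\<in>B. X i a p q)"
    by (rule sum.cong[OF refl], rule sum.cong[OF refl], rule sum.swap)
  also have "\<dots> = (\<Sum>p\<in>C. \<Sum>q\<in>D. \<Sum>i\<in>A. \<Sum>a\<in>B. X i a p q)"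
    by (rule sum.cong[OF refl], rule sum.swap)
  finally show ?thesis .
qed

lemma S_expand:
  "mtrace n (mmul n (mtranspose (poly_mat n f (norm_lap n G))) (mmul n (norm_lap n G) (poly_mat n f (norm_lap n G))))
   = (\<Sum>p\<le>degree f. \<Sum>q\<le>degree f. coeff f p * coeff f q * mtrace n (mpow n (norm_lap n G) (p + q + 1)))"
proof -
  let ?L = "norm_lap n G"
  let ?P = "mpow n ?L"
  have sym: "?P p a i = ?P p i a" if "a < n" "i < n" for p a i
    using mpow_sym[of n ?L, OF norm_lap_sym] that by blast
  have LF: "mmul n ?L (poly_mat n f ?L) = (\<lambda>a i. \<Sum>q\<le>degree f. coeff f q * ?P (Suc q) a i)"
    unfolding poly_mat_def mmul_lincomb_right by simp
  have "mtrace n (mmul n (mtranspose (poly_mat n f ?L)) (mmul n ?L (poly_mat n f ?L)))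
      = (\<Sum>i<n. \<Sum>a<n. (\<Sum>p\<le>degree f. coeff f p * ?P p i a) * (\<Sum>q\<le>degree f. coeff f q * ?P (Suc q) a i))"
  proof -
    have PM: "poly_mat n f ?L a i = (\<Sum>p\<le>degree f. coeff f p * ?P p i a)" if "a < n" "i < n" for a i
      unfolding poly_mat_def by (intro sum.cong refl arg_cong[where f="\<lambda>x. coeff f _ * x"] sym[OF that])
    show ?thesis
      unfolding mtrace_def LF mtranspose_def
    proof (intro sum.cong refl)
      fix i assume i: "i \<in> {..<n}"
      show "mmul n (\<lambda>i j. poly_mat n f ?L j i) (\<lambda>a i. \<Sum>q\<le>degree f. coeff f q * ?P (Suc q) a i) i i =
        (\<Sum>a<n. (\<Sum>p\<le>degree f. coeff f p * ?P p i a) * (\<Sum>q\<le>degree f. coeff f q * ?P (Suc q) a i))"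
        unfolding mmul_def[of n "\<lambda>i j. poly_mat n f ?L j i"]
        by (intro sum.cong refl arg_cong2[where f="(*)"]) (use i in \<open>auto simp only: PM lessThan_iff\<close>)
    qed
  qed
  also have "\<dots> = (\<Sum>i<n. \<Sum>a<n. \<Sum>p\<le>degree f. \<Sum>q\<le>degree f. coeff f p * coeff f q * (?P p i a * ?P (Suc q) a i))"
    by (simp only: sum_product mult_ac)
  also have "\<dots> = (\<Sum>p\<le>degree f. \<Sum>q\<le>degree f. \<Sum>i<n. \<Sum>a<n. coeff f p * coeff f q * (?P p i a * ?P (Suc q) a i))"
    by (rule sum_swap4)
  also have "\<dots> = (\<Sum>p\<le>degree f. \<Sum>q\<le>degree f. coeff f p * coeff f q * (\<Sum>i<n. \<Sum>a<n. ?P p i a * ?P (Suc q) a i))"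
    by (simp only: sum_distrib_left)
  also have "\<dots> = (\<Sum>p\<le>degree f. \<Sum>q\<le>degree f. coeff f p * coeff f q * mtrace n (?P (p + q + 1)))"
  proof (intro sum.cong refl arg_cong[where f="\<lambda>x. _ * x"])
    fix p q
    have "(\<Sum>i<n. \<Sum>a<n. ?P p i a * ?P (Suc q) a i) = (\<Sum>i<n. mmul n (?P p) (?P (Suc q)) i i)"
      by (simp add: mmul_def)
    also have "\<dots> = mtrace n (?P (p + q + 1))"
      unfolding mtrace_def by (intro sum.cong refl) (subst mpow_add, auto)
    finally show "(\<Sum>i<n. \<Sum>a<n. ?P p i a * ?P (Suc q) a i) = mtrace n (?P (p + q + 1))" .
  qed
  finally show ?thesis .
qed

definition Kf :: "real poly \<Rightarrow> real" where
  "Kf f = (\<Sum>p\<le>degree f. \<Sum>q\<le>degree f. \<bar>coeff f p * coeff f q\<bar> * (real (p + q + 1) * 2 ^ (p + q + 1)))"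

lemma S_approx:
  "\<bar>mtrace n (mmul n (mtranspose (poly_mat n f (norm_lap n G))) (mmul n (norm_lap n G) (poly_mat n f (norm_lap n G))))
    - (\<Sum>i<n. phi f (deg n G i / real n))\<bar> \<le> Kf f"
proof -
  have "(\<Sum>i<n. phi f (deg n G i / real n)) =
     (\<Sum>p\<le>degree f. \<Sum>q\<le>degree f. coeff f p * coeff f q * mtrace n (mpow n (Dg n G) (p + q + 1)))"
    unfolding phi_expand mtrace_Dg_pow
    by (simp add: sum_distrib_left sum.swap[of _ "{..<n}"])
  then have "\<bar>mtrace n (mmul n (mtranspose (poly_mat n f (norm_lap n G))) (mmul n (norm_lap n G) (poly_mat n f (norm_lap n G))))
    - (\<Sum>i<n. phi f (deg n G i / real n))\<bar> =
    \<bar>\<Sum>p\<le>degree f. \<Sum>q\<le>degree f. coeff f p * coeff f q *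
       (mtrace n (mpow n (norm_lap n G) (p + q + 1)) - mtrace n (mpow n (Dg n G) (p + q + 1)))\<bar>"
    unfolding S_expand by (simp add: sum_subtractf right_diff_distrib)
  also have "\<dots> \<le> Kf f"
    unfolding Kf_def
  proof (rule order.trans[OF sum_abs], intro sum_mono, rule order.trans[OF sum_abs], intro sum_mono)
    fix p q
    show "\<bar>coeff f p * coeff f q * (mtrace n (mpow n (norm_lap n G) (p + q + 1)) - mtrace n (mpow n (Dg n G) (p + q + 1)))\<bar>
       \<le> \<bar>coeff f p * coeff f q\<bar> * (real (p + q + 1) * 2 ^ (p + q + 1))"
      unfolding abs_mult[of "coeff f p * coeff f q"]
      by (rule mult_left_mono[OF trace_approx1]) simp
  qed
  finally show ?thesis .
qed


lemma mmul_assoc_gen: "mmul p (mmul q A B) C = mmul q A (mmul p B C)"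
  unfolding mmul_def by (auto simp: sum_distrib_left sum_distrib_right mult.assoc intro!: ext sum.swap[THEN trans])

lemma mtranspose_mmul: "mtranspose (mmul q A B) = mmul q (mtranspose B) (mtranspose A)"
  by (auto simp: mtranspose_def mmul_def mult.commute intro!: ext)

lemma mtrace_cyclic: "mtrace n (mmul n A B) = mtrace n (mmul n B A)"
  unfolding mtrace_def mmul_def by (subst sum.swap) (simp add: mult.commute)

definition Bm :: "nat \<Rightarrow> real poly \<Rightarrow> (nat \<times> nat \<Rightarrow> bool) \<Rightarrow> nat \<Rightarrow> nat \<Rightarrow> real" where
  "Bm n f G = mmul n (mtranspose (poly_mat n f (norm_lap n G))) (mmul n (norm_lap n G) (poly_mat n f (norm_lap n G)))"

definition Rb :: "real poly \<Rightarrow> real" where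
  "Rb f = pbound f 2 * (2 * pbound f 2)"

lemma bnd_Bm: "bnd n (Rb f) (Bm n f G)"
  unfolding Bm_def Rb_def
  by (intro bnd_mmul bnd_transpose bnd_poly_mat bnd_norm_lap)

lemma Rb_nonneg: "Rb f \<ge> 0"
  unfolding Rb_def using pbound_nonneg[of 2 f] by simp

lemma sum_sq_Bm: "(\<Sum>i<n. \<Sum>j<n. (Bm n f G i j)\<^sup>2) \<le> real n * (Rb f)\<^sup>2"
proof -
  have "(\<Sum>j<n. (Bm n f G i j)\<^sup>2) \<le> (Rb f)\<^sup>2" if i: "i < n" for i
  proof -
    have row: "(\<Sum>j<n. \<bar>Bm n f G i j\<bar>) \<le> Rb f" using bnd_Bm[of n f G] i by (auto simp: bnd_def)
    have "(\<Sum>j<n. (Bm n f G i j)\<^sup>2) \<le> (\<Sum>j<n. Rb f * \<bar>Bm n f G i j\<bar>)"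
    proof (intro sum_mono)
      fix j assume j: "j \<in> {..<n}"
      have "\<bar>Bm n f G i j\<bar> \<le> (\<Sum>j<n. \<bar>Bm n f G i j\<bar>)"
        using j by (intro member_le_sum) auto
      then have "\<bar>Bm n f G i j\<bar> \<le> Rb f" using row by linarith
      then have "\<bar>Bm n f G i j\<bar> * \<bar>Bm n f G i j\<bar> \<le> Rb f * \<bar>Bm n f G i j\<bar>"
        by (intro mult_right_mono) auto
      then show "(Bm n f G i j)\<^sup>2 \<le> Rb f * \<bar>Bm n f G i j\<bar>"
        by (simp add: power2_eq_square)
    qed
    also have "\<dots> = Rb f * (\<Sum>j<n. \<bar>Bm n f G i j\<bar>)" by (simp add: sum_distrib_left)
    also have "\<dots> \<le> Rb f * Rb f" using row Rb_nonneg[of f] by (intro mult_left_mono) auto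
    finally show ?thesis by (simp add: power2_eq_square)
  qed
  then have "(\<Sum>i<n. \<Sum>j<n. (Bm n f G i j)\<^sup>2) \<le> (\<Sum>i<n. (Rb f)\<^sup>2)" by (intro sum_mono) auto
  then show ?thesis by simp
qed

lemma h_stat_formula:
  "h_stat n d f G Z = (\<Sum>i<n. \<Sum>j<n. Bm n f G i j * (\<Sum>k<d. Z (i, k) * Z (j, k))) / (real d * real n)"
proof -
  let ?L = "norm_lap n G" and ?F = "poly_mat n f (norm_lap n G)" and ?X0 = "gauss_init d Z"
  let ?Y = "mmul d ?X0 (mtranspose ?X0)"
  have XX: "mmul d (mmul n ?F ?X0) (mtranspose (mmul n ?F ?X0)) = mmul n ?F (mmul n ?Y (mtranspose ?F))"
    by (simp add: mtranspose_mmul mmul_assoc_gen)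
  have "mtrace n (mmul n ?L (mmul d (mmul n ?F ?X0) (mtranspose (mmul n ?F ?X0))))
      = mtrace n (mmul n (mmul n ?L ?F) (mmul n ?Y (mtranspose ?F)))"
    unfolding XX by (simp add: mmul_assoc)
  also have "\<dots> = mtrace n (mmul n (mmul n ?Y (mtranspose ?F)) (mmul n ?L ?F))"
    by (rule mtrace_cyclic)
  also have "\<dots> = mtrace n (mmul n ?Y (Bm n f G))"
    by (simp add: mmul_assoc Bm_def)
  also have "\<dots> = (\<Sum>i<n. \<Sum>j<n. ?Y i j * Bm n f G j i)"
    by (simp add: mtrace_def mmul_def)
  also have "\<dots> = (\<Sum>j<n. \<Sum>i<n. ?Y i j * Bm n f G j i)"
    by (rule sum.swap)
  also have "\<dots> = (\<Sum>i<n. \<Sum>j<n. Bm n f G i j * (\<Sum>k<d. Z (i, k) * Z (j, k))) / real d"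
    by (simp add: mmul_def mtranspose_def gauss_init_def sum_divide_distrib sum_distrib_left
        mult_ac real_sqrt_mult[symmetric])
  finally show ?thesis
    by (simp add: h_stat_def Let_def)
qed


abbreviation NN :: "real measure" where "NN \<equiv> density lborel std_normal_density"

lemma prob_NN: "prob_space NN"
  by (intro prob_space_normal_density) simp

definition gm :: "nat \<Rightarrow> real" where "gm k = integral\<^sup>L NN (\<lambda>x. x ^ k)"

lemma NN_moment: "has_bochner_integral NN (\<lambda>x. x ^ k) (integral\<^sup>L lborel (\<lambda>x. std_normal_density x * x ^ k))"
proof -
  have "integrable NN (\<lambda>x. x ^ k)"
    by (subst integrable_density) (auto simp: integrable_std_normal_moment)
  moreover have "integral\<^sup>L NN (\<lambda>x. x ^ k) = integral\<^sup>L lborel (\<lambda>x. std_normal_density x * x ^ k)"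
    by (subst integral_density) auto
  ultimately show ?thesis by (simp add: has_bochner_integral_iff)
qed

lemma gm_eq: "gm k = integral\<^sup>L lborel (\<lambda>x. std_normal_density x * x ^ k)"
  using NN_moment[of k] by (simp add: gm_def has_bochner_integral_iff)

lemma gm_0: "gm 0 = 1" using prob_space.prob_space[OF prob_NN] by (simp add: gm_def)
lemma gm_1: "gm (Suc 0) = 0" using integral_std_normal_moment_odd[of 0] by (simp add: gm_eq)
lemma gm_2: "gm (Suc (Suc 0)) = 1" using integral_std_normal_moment_even[of 1] by (simp add: gm_eq eval_nat_numeral)
lemma gm_3: "gm (Suc (Suc (Suc 0))) = 0" using integral_std_normal_moment_odd[of 1] by (simp add: gm_eq eval_nat_numeral)
lemma gm_4: "gm (Suc (Suc (Suc (Suc 0)))) = 3"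
proof -
  have "gm (2 * 2) = fact (2 * 2) / (2 ^ 2 * fact 2)" using integral_std_normal_moment_even[of 2] by (simp add: gm_eq)
  then show ?thesis by (simp add: fact_numeral eval_nat_numeral)
qed

lemma gauss_monomial:
  fixes I :: "'i set" and cnt :: "'i \<Rightarrow> nat"
  assumes "finite I"
  shows "has_bochner_integral (PiM I (\<lambda>_. NN)) (\<lambda>x. \<Prod>i\<in>I. x i ^ cnt i) (\<Prod>i\<in>I. gm (cnt i))"
proof -
  interpret NN: prob_space NN by (rule prob_NN)
  interpret P: product_sigma_finite "\<lambda>_::'i. NN" by unfold_locales
  have int: "integrable NN (\<lambda>x. x ^ cnt i)" for i
    using NN_moment has_bochner_integral_iff by blast
  show ?thesis
    unfolding has_bochner_integral_iff
    using P.product_integrable_prod[OF assms, of "\<lambda>i x. x ^ cnt i"] P.product_integral_prod[OF assms, of "\<lambda>i x. x ^ cnt i"] int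
    by (simp add: gm_def)
qed

lemma prod_pow_delta: "finite I \<Longrightarrow> a \<in> I \<Longrightarrow> (\<Prod>i\<in>I. (x i :: real) ^ (if a = i then 1 else 0)) = x a"
  by (simp add: if_distrib[where f="\<lambda>k. _ ^ k"] prod.delta cong: if_cong)

definition iss :: "'i \<Rightarrow> 'i \<Rightarrow> 'i \<Rightarrow> 'i \<Rightarrow> real" where
  "iss a b c e = (if a = b \<and> c = e then 1 else 0) + (if a = c \<and> b = e then 1 else 0) + (if a = e \<and> b = c then 1 else 0)"

lemma gauss_isserlis:
  fixes I :: "'i set"
  assumes I: "finite I" and abce: "a \<in> I" "b \<in> I" "c \<in> I" "e \<in> I"
  shows "has_bochner_integral (PiM I (\<lambda>_. NN)) (\<lambda>x. x a * x b * x c * x e) (iss a b c e)"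
proof -
  define cnt where "cnt i = (if a = i then 1 else 0) + (if b = i then 1 else 0) + (if c = i then 1 else 0) + (if e = i then (1::nat) else 0)" for i
  have eqf: "(\<Prod>i\<in>I. x i ^ cnt i) = x a * x b * x c * x e" for x :: "'i \<Rightarrow> real"
    unfolding cnt_def power_add prod.distrib using I abce by (simp add: prod_pow_delta)
  have "(\<Prod>i\<in>I. gm (cnt i)) = (\<Prod>i\<in>{a,b,c,e}. gm (cnt i))"
    using I abce by (intro prod.mono_neutral_right) (auto simp: cnt_def gm_0)
  also have "\<dots> = iss a b c e"
    unfolding cnt_def iss_def
    by (cases "a = b"; cases "a = c"; cases "a = e"; cases "b = c"; cases "b = e"; cases "c = e")
       (simp_all add: gm_0 gm_1 gm_2 gm_3 gm_4 insert_commute)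
  finally show ?thesis using gauss_monomial[OF I, of cnt] eqf by simp
qed

lemma gauss_pair:
  fixes I :: "'i set"
  assumes I: "finite I" and ab: "a \<in> I" "b \<in> I"
  shows "has_bochner_integral (PiM I (\<lambda>_. NN)) (\<lambda>x. x a * x b) (if a = b then 1 else 0)"
proof -
  define cnt where "cnt i = (if a = i then 1 else 0) + (if b = i then (1::nat) else 0)" for i
  have eqf: "(\<Prod>i\<in>I. x i ^ cnt i) = x a * x b" for x :: "'i \<Rightarrow> real"
    unfolding cnt_def power_add prod.distrib using I ab by (simp add: prod_pow_delta)
  have "(\<Prod>i\<in>I. gm (cnt i)) = (\<Prod>i\<in>{a,b}. gm (cnt i))"
    using I ab by (intro prod.mono_neutral_right) (auto simp: cnt_def gm_0)
  also have "\<dots> = (if a = b then 1 else 0)"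
    unfolding cnt_def by (cases "a = b") (simp_all add: gm_0 gm_1 gm_2)
  finally show ?thesis using gauss_monomial[OF I, of cnt] eqf by simp
qed


definition Qf :: "nat \<Rightarrow> nat \<Rightarrow> (nat \<Rightarrow> nat \<Rightarrow> real) \<Rightarrow> (nat \<times> nat \<Rightarrow> real) \<Rightarrow> real" where
  "Qf n d B z = (\<Sum>i<n. \<Sum>j<n. B i j * (\<Sum>k<d. z (i, k) * z (j, k)))"

lemma gauss_law_eq: "gauss_law n d = PiM ({..<n} \<times> {..<d}) (\<lambda>_. NN)"
  by (simp add: gauss_law_def)

lemma EQ: "has_bochner_integral (gauss_law n d) (Qf n d B) (real d * (\<Sum>i<n. B i i))"
proof -
  have "has_bochner_integral (gauss_law n d) (Qf n d B)
     (\<Sum>i<n. \<Sum>j<n. B i j * (\<Sum>k<d. if (i, k) = (j, k) then 1 else 0))"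
    unfolding Qf_def gauss_law_eq
    by (intro has_bochner_integral_sum has_bochner_integral_mult_right gauss_pair) auto
  moreover have "(\<Sum>i<n. \<Sum>j<n. B i j * (\<Sum>k<d. if (i, k) = (j, k) then 1 else 0)) = real d * (\<Sum>i<n. B i i)"
    by (simp add: if_distrib[where f="\<lambda>x. _ * x"] sum.delta sum_distrib_left mult.commute cong: if_cong)
  ultimately show ?thesis by simp
qed

lemma Qf_sq: "(Qf n d B z)\<^sup>2 = (\<Sum>i<n. \<Sum>i'<n. \<Sum>j'<n. \<Sum>j<n. \<Sum>k'<d. \<Sum>k<d.
     B i j * (B i' j' * (z (i, k) * (z (i', k') * (z (j', k') * z (j, k))))))"
  unfolding Qf_def power2_eq_square
  by (simp add: sum_distrib_left sum_distrib_right mult_ac)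

lemma gauss_isserlis':
  fixes I :: "'i set"
  assumes I: "finite I" and abce: "a \<in> I" "b \<in> I" "c \<in> I" "e \<in> I"
  shows "has_bochner_integral (PiM I (\<lambda>_. NN)) (\<lambda>x. x a * (x b * (x c * x e))) (iss a b c e)"
  using gauss_isserlis[OF assms] by (simp add: mult.assoc)

definition V2 :: "nat \<Rightarrow> nat \<Rightarrow> (nat \<Rightarrow> nat \<Rightarrow> real) \<Rightarrow> real" where
  "V2 n d B = (\<Sum>i<n. \<Sum>i'<n. \<Sum>j'<n. \<Sum>j<n. \<Sum>k'<d. \<Sum>k<d.
     B i j * (B i' j' * iss (i, k) (i', k') (j', k') (j, k)))"

lemma EQ2: "has_bochner_integral (gauss_law n d) (\<lambda>z. (Qf n d B z)\<^sup>2) (V2 n d B)"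
  unfolding Qf_sq gauss_law_eq V2_def
  by (intro has_bochner_integral_sum has_bochner_integral_mult_right gauss_isserlis') auto

lemma if_and_zero: "(if A \<and> C then x else (0::real)) = (if A then if C then x else 0 else 0)"
  by simp

lemma sum_if_const: "(\<Sum>x\<in>A. if P then f x else (0::real)) = (if P then (\<Sum>x\<in>A. f x) else 0)"
  by simp

lemma V2_eq: "V2 n d B = (real d * (\<Sum>i<n. B i i))\<^sup>2 + real d * (\<Sum>i<n. \<Sum>j<n. (B i j)\<^sup>2)
    + real d * (\<Sum>i<n. \<Sum>j<n. B i j * B j i)"
proof -
  have T1: "(\<Sum>i<n. \<Sum>i'<n. \<Sum>j'<n. \<Sum>j<n. \<Sum>k'<d. \<Sum>k<d.
     B i j * (B i' j' * (if (i, k) = (i', k') \<and> (j', k') = (j, k) then 1 else 0))) = real d * (\<Sum>i<n. \<Sum>j<n. (B i j)\<^sup>2)"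
    by (simp add: if_and_zero sum_if_const if_distrib[where f="\<lambda>x. _ * x"] sum.delta sum.delta' power2_eq_square
        sum_distrib_left sum_distrib_right mult_ac cong: if_cong)
  have T2: "(\<Sum>i<n. \<Sum>i'<n. \<Sum>j'<n. \<Sum>j<n. \<Sum>k'<d. \<Sum>k<d.
     B i j * (B i' j' * (if (i, k) = (j', k') \<and> (i', k') = (j, k) then 1 else 0))) = real d * (\<Sum>i<n. \<Sum>j<n. B i j * B j i)"
    by (simp add: if_and_zero sum_if_const if_distrib[where f="\<lambda>x. _ * x"] sum.delta sum.delta' power2_eq_square
        sum_distrib_left sum_distrib_right mult_ac cong: if_cong)
  have T3: "(\<Sum>i<n. \<Sum>i'<n. \<Sum>j'<n. \<Sum>j<n. \<Sum>k'<d. \<Sum>k<d.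
     B i j * (B i' j' * (if (i, k) = (j, k) \<and> (i', k') = (j', k') then 1 else 0))) = (real d * (\<Sum>i<n. B i i))\<^sup>2"
    by (simp add: if_and_zero if_distrib[where f="\<lambda>x. _ * x"] sum.delta sum.delta' power2_eq_square
        sum_distrib_left sum_distrib_right mult_ac cong: if_cong)
  show ?thesis
    unfolding V2_def iss_def distrib_left sum.distrib T1 T2 T3 by simp
qed


lemma prob_gauss_law: "prob_space (gauss_law n d)"
  unfolding gauss_law_eq by (intro prob_space_PiM prob_NN)

lemma cross_le: "(\<Sum>i<n. \<Sum>j<n. B i j * B j i) \<le> (\<Sum>i<n. \<Sum>j<n. (B i j)\<^sup>2 :: real)"
proof -
  have "(\<Sum>i<n. \<Sum>j<n. B i j * B j i) \<le> (\<Sum>i<n. \<Sum>j<n. ((B i j)\<^sup>2 + (B j i)\<^sup>2) / 2)"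
  proof (intro sum_mono)
    fix i j
    have "0 \<le> (B i j - B j i)\<^sup>2" by simp
    then show "B i j * B j i \<le> ((B i j)\<^sup>2 + (B j i)\<^sup>2) / 2" by (simp add: power2_diff)
  qed
  also have "\<dots> = ((\<Sum>i<n. \<Sum>j<n. (B i j)\<^sup>2) + (\<Sum>i<n. \<Sum>j<n. (B j i)\<^sup>2)) / 2"
    by (simp only: sum_divide_distrib[symmetric] sum.distrib)
  also have "(\<Sum>i<n. \<Sum>j<n. (B j i)\<^sup>2) = (\<Sum>i<n. \<Sum>j<n. (B i j)\<^sup>2)" by (rule sum.swap)
  finally show ?thesis by simp
qed

lemma gauss_tail:
  assumes a: "a > 0"
  shows "measure (gauss_law n d) {z \<in> space (gauss_law n d). \<bar>Qf n d B z - real d * (\<Sum>i<n. B i i)\<bar> \<ge> a}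
           \<le> 2 * real d * (\<Sum>i<n. \<Sum>j<n. (B i j)\<^sup>2) / a\<^sup>2"
proof -
  interpret P: prob_space "gauss_law n d" by (rule prob_gauss_law)
  have i1: "integrable (gauss_law n d) (Qf n d B)" and e1: "P.expectation (Qf n d B) = real d * (\<Sum>i<n. B i i)"
    using EQ[of n d B] by (simp_all add: has_bochner_integral_iff)
  have i2: "integrable (gauss_law n d) (\<lambda>z. (Qf n d B z)\<^sup>2)" and e2: "P.expectation (\<lambda>z. (Qf n d B z)\<^sup>2) = V2 n d B"
    using EQ2[of n d B] by (simp_all add: has_bochner_integral_iff)
  have rv: "Qf n d B \<in> borel_measurable (gauss_law n d)" using i1 by (rule borel_measurable_integrable)
  have var: "P.variance (Qf n d B) = real d * (\<Sum>i<n. \<Sum>j<n. (B i j)\<^sup>2) + real d * (\<Sum>i<n. \<Sum>j<n. B i j * B j i)"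
    using P.variance_eq[OF i1 i2] e1 e2 V2_eq by simp
  have "P.prob {z \<in> space (gauss_law n d). \<bar>Qf n d B z - real d * (\<Sum>i<n. B i i)\<bar> \<ge> a} \<le> P.variance (Qf n d B) / a\<^sup>2"
    using P.Chebyshev_inequality[OF rv _ a] i2 e1 by simp
  also have "\<dots> \<le> 2 * real d * (\<Sum>i<n. \<Sum>j<n. (B i j)\<^sup>2) / a\<^sup>2"
    unfolding var using cross_le[of B n]
    by (intro divide_right_mono) (auto intro!: mult_left_mono simp: algebra_simps)
  finally show ?thesis .
qed


lemma bind_nonmeas_null:
  assumes ne: "space M \<noteq> {}"
    and sets_f: "\<And>x. x \<in> space M \<Longrightarrow> sets (f x) = sets N"
    and sub: "\<And>x. x \<in> space M \<Longrightarrow> subprob_space (f x)"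
    and pos: "emeasure M (space M) \<noteq> 0"
    and nm: "f \<notin> measurable M (subprob_algebra N)"
  shows "emeasure (bind M f) A = 0"
proof -
  define S where "S = subprob_algebra N"
  define x0 where "x0 = (SOME x. x \<in> space M)"
  have x0: "x0 \<in> space M" unfolding x0_def using ne by (simp add: some_in_eq)
  have "subprob_algebra (f x0) = subprob_algebra N" by (rule subprob_algebra_cong[OF sets_f[OF x0]])
  then have bind_eq: "bind M f = join (distr M S f)"
    unfolding bind_nonempty[OF ne] S_def x0_def[symmetric] by simp
  have fS: "f x \<in> space S" if "x \<in> space M" for x
    using sets_f[OF that] sub[OF that] by (simp add: S_def space_subprob_algebra)
  obtain B where B: "B \<in> sets S" "f -` B \<inter> space M \<notin> sets M"
    using nm fS unfolding measurable_def S_def by auto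
  define B' where "B' = space S - B"
  have B'S: "B' \<in> sets S" using B by (simp add: B'_def)
  have pre: "f -` B' \<inter> space M = space M - (f -` B \<inter> space M)"
    using fS by (auto simp: B'_def)
  have B'nm: "f -` B' \<inter> space M \<notin> sets M"
  proof
    assume "f -` B' \<inter> space M \<in> sets M"
    then have "space M - (f -` B' \<inter> space M) \<in> sets M" by auto
    moreover have "space M - (f -` B' \<inter> space M) = f -` B \<inter> space M" using pre by auto
    ultimately show False using B by simp
  qed
  define \<mu> where "\<mu> = (\<lambda>A. emeasure M (f -` A \<inter> space M))"
  have not_ms: "\<not> measure_space (space S) (sets S) \<mu>"
  proof
    assume ms: "measure_space (space S) (sets S) \<mu>"
    have "additive (sets S) \<mu>"
      using ms unfolding measure_space_def
      by (intro ring_of_sets.countably_additive_additive[OF sets.ring_of_sets_axioms]) auto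
    moreover have disj: "B \<inter> B' = {}" by (auto simp: B'_def)
    ultimately have "\<mu> (B \<union> B') = \<mu> B + \<mu> B'"
      using B(1) B'S unfolding additive_def by blast
    moreover have "B \<union> B' = space S" using sets.sets_into_space[OF B(1)] by (auto simp: B'_def)
    moreover have "\<mu> (space S) = emeasure M (space M)" using fS by (auto simp: \<mu>_def intro!: arg_cong[where f="emeasure M"])
    moreover have "\<mu> B = 0" "\<mu> B' = 0" using B(2) B'nm by (simp_all add: \<mu>_def emeasure_notin_sets)
    ultimately show False using pos by simp
  qed
  have D0: "emeasure (distr M S f) C = 0" for C
    unfolding distr_def emeasure_measure_of_conv sets.sigma_sets_eq using not_ms by (simp add: \<mu>_def)
  have "distr M S f = null_measure (distr M S f)"
    by (rule measure_eqI) (simp_all add: D0)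
  then have "(\<integral>\<^sup>+ M'. emeasure M' A \<partial>distr M S f) = 0"
    by (metis nn_integral_null_measure)
  then show ?thesis
    unfolding bind_eq join_def emeasure_measure_of_conv by simp
qed


lemma indep_components:
  assumes fin: "finite I" and ne: "I \<noteq> {}" and P: "\<And>i. i \<in> I \<Longrightarrow> prob_space (M i)"
  shows "prob_space.indep_vars (PiM I M) M (\<lambda>i x. x i) I"
proof -
  interpret prob_space "PiM I M" by (rule prob_space_PiM[OF P])
  define M2 where "M2 i = (if i \<in> I then M i else count_space UNIV)" for i
  have PiM2: "PiM I M2 = PiM I M" by (rule PiM_cong) (auto simp: M2_def)
  have rv: "(\<lambda>x. x i) \<in> measurable (PiM I M) (M2 i)" for i
  proof (cases "i \<in> I")
    case True then show ?thesis by (simp add: M2_def)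
  next
    case False
    have "(\<lambda>x. undefined) \<in> measurable (PiM I M) (M2 i)" using False by (simp add: M2_def)
    moreover have "x i = undefined" if "x \<in> space (PiM I M)" for x
      using that False by (auto simp: space_PiM PiE_def extensional_def)
    ultimately show ?thesis by (subst measurable_cong) auto
  qed
  have "distr (PiM I M) (PiM I M2) (\<lambda>x. \<lambda>i\<in>I. x i) = distr (PiM I M) (PiM I M) (\<lambda>x. x)"
    unfolding PiM2 by (rule distr_cong) (auto simp: space_PiM PiE_def extensional_restrict)
  also have "\<dots> = PiM I M" by simp
  also have "\<dots> = PiM I (\<lambda>i. distr (PiM I M) (M2 i) (\<lambda>x. x i))"
    by (rule PiM_cong) (auto simp: M2_def distr_PiM_component[of I M, OF P])
  finally have "indep_vars M2 (\<lambda>i x. x i) I"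
    by (subst indep_vars_iff_distr_eq_PiM[OF ne]) (use rv in auto)
  then show ?thesis
    by (rule indep_vars_cong[THEN iffD1, rotated 3]) (auto simp: M2_def)
qed

lemma integral_PiM_component:
  fixes g :: "'b \<Rightarrow> real"
  assumes P: "\<And>i. i \<in> I \<Longrightarrow> prob_space (M i)" and i: "i \<in> I" and g: "g \<in> borel_measurable (M i)"
  shows "integral\<^sup>L (PiM I M) (\<lambda>x. g (x i)) = integral\<^sup>L (M i) g"
proof -
  have "integral\<^sup>L (M i) g = integral\<^sup>L (distr (PiM I M) (M i) (\<lambda>x. x i)) g"
    by (simp add: distr_PiM_component[of I M, OF P i])
  also have "\<dots> = integral\<^sup>L (PiM I M) (\<lambda>x. g (x i))"
    using i g by (intro integral_distr) auto
  finally show ?thesis by simp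
qed

lemma hoeffding_PiM:
  fixes g :: "'i \<Rightarrow> 'b \<Rightarrow> real"
  assumes fin: "finite I" and JI: "J \<subseteq> I" and ne: "J \<noteq> {}" and P: "\<And>i. i \<in> I \<Longrightarrow> prob_space (M i)"
    and g: "\<And>i. i \<in> J \<Longrightarrow> g i \<in> borel_measurable (M i)"
    and ab: "\<And>i. i \<in> J \<Longrightarrow> AE x in M i. g i x \<in> {a..b}" and altb: "a < b" and eps: "\<epsilon> \<ge> 0"
  shows "measure (PiM I M) {x \<in> space (PiM I M). \<bar>(\<Sum>i\<in>J. g i (x i)) - (\<Sum>i\<in>J. integral\<^sup>L (M i) (g i))\<bar> \<ge> \<epsilon>}
          \<le> 2 * exp (- 2 * \<epsilon>\<^sup>2 / (real (card J) * (b - a)\<^sup>2))"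
proof -
  interpret PP: prob_space "PiM I M" by (rule prob_space_PiM[OF P])
  have finJ: "finite J" using fin JI finite_subset by blast
  have neI: "I \<noteq> {}" using ne JI by auto
  have ind0: "PP.indep_vars M (\<lambda>i x. x i) J"
    by (rule PP.indep_vars_subset[OF indep_components[OF fin neI P] JI])
  have ind: "PP.indep_vars (\<lambda>_. borel) (\<lambda>i x. g i (x i)) J"
    by (rule PP.indep_vars_compose2[OF ind0]) (use g in auto)
  have AEi: "AE x in PiM I M. g i (x i) \<in> {a..b}" if "i \<in> J" for i
    using AE_PiM_component[of I M, OF P _ ab[OF that]] that JI by auto
  interpret H: Hoeffding_ineq "PiM I M" J "\<lambda>i x. g i (x i)" "\<lambda>_. a" "\<lambda>_. b" "\<Sum>i\<in>J. PP.expectation (\<lambda>x. g i (x i))"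
    by unfold_locales (use finJ ind AEi in auto)
  have pos: "(\<Sum>i\<in>J. (b - a)\<^sup>2) > 0" using altb ne finJ by (intro sum_pos) auto
  have E: "(\<Sum>i\<in>J. PP.expectation (\<lambda>x. g i (x i))) = (\<Sum>i\<in>J. integral\<^sup>L (M i) (g i))"
    by (intro sum.cong refl integral_PiM_component[OF P]) (use g JI in auto)
  show ?thesis using H.Hoeffding_ineq_abs_ge[OF eps pos] by (simp add: E)
qed


definition mmeas :: "'a measure \<Rightarrow> nat \<Rightarrow> nat \<Rightarrow> ('a \<Rightarrow> nat \<Rightarrow> nat \<Rightarrow> real) \<Rightarrow> bool" where
  "mmeas M r c A \<longleftrightarrow> (\<forall>i<r. \<forall>j<c. (\<lambda>x. A x i j) \<in> borel_measurable M)"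

lemma mmeasD: "mmeas M r c A \<Longrightarrow> i < r \<Longrightarrow> j < c \<Longrightarrow> (\<lambda>x. A x i j) \<in> borel_measurable M"
  by (simp add: mmeas_def)

lemma mmeas_mmul: "mmeas M r m A \<Longrightarrow> mmeas M m c B \<Longrightarrow> mmeas M r c (\<lambda>x. mmul m (A x) (B x))"
  unfolding mmeas_def mmul_def by (auto intro!: borel_measurable_sum borel_measurable_times)

lemma mmeas_const: "mmeas M r c (\<lambda>x. A)"
  by (simp add: mmeas_def)

lemma mmeas_mpow: "mmeas M n n A \<Longrightarrow> mmeas M n n (\<lambda>x. mpow n (A x) k)"
  by (induction k) (auto intro: mmeas_mmul simp: mmeas_const[unfolded mmeas_def] mmeas_def[of _ _ _ "\<lambda>x. \<lambda>i j. if i = j then 1 else 0"])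

lemma mmeas_poly_mat: "mmeas M n n A \<Longrightarrow> mmeas M n n (\<lambda>x. poly_mat n f (A x))"
proof -
  assume A: "mmeas M n n A"
  have "(\<lambda>x. mpow n (A x) k i j) \<in> borel_measurable M" if "i < n" "j < n" for i j k
    using mmeas_mpow[OF A, of k] that by (simp add: mmeas_def)
  then show ?thesis unfolding poly_mat_def mmeas_def
    by (auto intro!: borel_measurable_sum borel_measurable_times)
qed

lemma mmeas_transpose: "mmeas M r c A \<Longrightarrow> mmeas M c r (\<lambda>x. mtranspose (A x))"
  by (simp add: mmeas_def mtranspose_def)

lemma mtrace_meas: "mmeas M n n A \<Longrightarrow> (\<lambda>x. mtrace n (A x)) \<in> borel_measurable M"
  unfolding mtrace_def mmeas_def by (auto intro!: borel_measurable_sum)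

definition PS :: "nat \<Rightarrow> (nat \<times> nat) set" where "PS n = {(i, j). i < j \<and> j < n}"

definition XS :: "nat \<Rightarrow> (nat \<times> nat \<Rightarrow> bool) measure" where
  "XS n = PiM (PS n) (\<lambda>_. count_space UNIV)"

lemma adj_meas_XS: "i < n \<Longrightarrow> j < n \<Longrightarrow> (\<lambda>g. adj g i j) \<in> borel_measurable (XS n)"
proof -
  assume ij: "i < n" "j < n"
  have comp: "(\<lambda>g. g p) \<in> measurable (XS n) (count_space UNIV)" if "p \<in> PS n" for p
    unfolding XS_def using that by simp
  have ind: "(\<lambda>g. if g p then 1 else (0::real)) \<in> borel_measurable (XS n)" if "p \<in> PS n" for p
    by (rule measurable_compose[OF comp[OF that]]) simp
  show ?thesis
    unfolding adj_def using ind[of "(i, j)"] ind[of "(j, i)"] ij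
    by (cases "i < j"; cases "j < i") (auto simp: PS_def)
qed

lemma mmeas_norm_lap:
  assumes "\<pi> \<in> measurable M (XS n)"
  shows "mmeas M n n (\<lambda>x. norm_lap n (\<pi> x))"
  unfolding mmeas_def norm_lap_def
proof (intro allI impI)
  fix i j assume ij: "i < n" "j < n"
  have a: "(\<lambda>x. adj (\<pi> x) a b) \<in> borel_measurable M" if "a < n" "b < n" for a b
    using measurable_compose[OF assms adj_meas_XS[OF that]] .
  show "(\<lambda>x. ((if i = j then \<Sum>l<n. adj (\<pi> x) i l else 0) - adj (\<pi> x) i j) / real n) \<in> borel_measurable M"
    using a ij by (auto intro!: borel_measurable_sum borel_measurable_divide borel_measurable_diff)
qed

lemma h_stat_meas:
  "(\<lambda>x. h_stat n d f (fst x) (snd x)) \<in> borel_measurable (XS n \<Otimes>\<^sub>M gauss_law n d)"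
proof -
  let ?M = "XS n \<Otimes>\<^sub>M gauss_law n d"
  have L: "mmeas ?M n n (\<lambda>x. norm_lap n (fst x))" by (rule mmeas_norm_lap) simp
  have Z: "mmeas ?M n d (\<lambda>x. gauss_init d (snd x))"
    unfolding mmeas_def gauss_init_def
  proof (intro allI impI)
    fix i k assume "i < n" "k < d"
    then have "(\<lambda>z. z (i, k)) \<in> borel_measurable (gauss_law n d)" by (simp add: gauss_law_def)
    then have "(\<lambda>x. snd x (i, k)) \<in> borel_measurable ?M" by (rule measurable_compose[OF measurable_snd])
    then show "(\<lambda>x. snd x (i, k) / sqrt (real d)) \<in> borel_measurable ?M" by simp
  qed
  have X: "mmeas ?M n d (\<lambda>x. mmul n (poly_mat n f (norm_lap n (fst x))) (gauss_init d (snd x)))"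
    by (intro mmeas_mmul mmeas_poly_mat L Z)
  have "mmeas ?M n n (\<lambda>x. mmul n (norm_lap n (fst x))
        (mmul d (mmul n (poly_mat n f (norm_lap n (fst x))) (gauss_init d (snd x)))
           (mtranspose (mmul n (poly_mat n f (norm_lap n (fst x))) (gauss_init d (snd x))))))"
    by (intro mmeas_mmul L X mmeas_transpose)
  from mtrace_meas[OF this] show ?thesis
    unfolding h_stat_def Let_def by simp
qed

lemma Bm_meas: "mmeas (XS n) n n (\<lambda>g. Bm n f g)"
proof -
  have L: "mmeas (XS n) n n (\<lambda>g. norm_lap n g)" by (rule mmeas_norm_lap) simp
  show ?thesis unfolding Bm_def by (intro mmeas_mmul mmeas_transpose mmeas_poly_mat L)
qed

lemma deg_meas: "i < n \<Longrightarrow> (\<lambda>g. deg n g i) \<in> borel_measurable (XS n)"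
  unfolding deg_def by (auto intro!: borel_measurable_sum adj_meas_XS)


abbreviation Unif :: "real measure" where "Unif \<equiv> uniform_measure lborel {0..1::real}"

definition UU :: "nat \<Rightarrow> (nat \<Rightarrow> real) measure" where
  "UU n = PiM {..<n} (\<lambda>_. Unif)"

definition KK :: "(real \<Rightarrow> real \<Rightarrow> real) \<Rightarrow> nat \<Rightarrow> (nat \<Rightarrow> real) \<Rightarrow> (nat \<times> nat \<Rightarrow> bool) measure" where
  "KK W n u = PiM (PS n) (\<lambda>p. measure_pmf (bernoulli_pmf (W (u (fst p)) (u (snd p)))))"

lemma graphon_law_eq: "graphon_law W n = bind (UU n) (KK W n)"
  unfolding graphon_law_def UU_def KK_def PS_def by simp

lemma sets_KK: "sets (KK W n u) = sets (XS n)"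
  unfolding KK_def XS_def by (intro sets_PiM_cong) auto

lemma space_KK: "space (KK W n u) = space (XS n)"
  using sets_KK by (rule sets_eq_imp_space_eq)

lemma prob_KK: "prob_space (KK W n u)"
  unfolding KK_def by (intro prob_space_PiM measure_pmf.prob_space_axioms)

lemma prob_Unif: "prob_space Unif"
  by (intro prob_space_uniform_measure) auto

lemma prob_UU: "prob_space (UU n)"
  unfolding UU_def by (intro prob_space_PiM prob_Unif)

lemma space_UU_ne: "space (UU n) \<noteq> {}"
  using prob_space.not_empty[OF prob_UU] .

lemma graphon_le:
  assumes A: "A \<in> sets (XS n)"
  shows "emeasure (graphon_law W n) A \<le> (\<integral>\<^sup>+u. emeasure (KK W n u) A \<partial>UU n)"
proof (cases "KK W n \<in> measurable (UU n) (subprob_algebra (XS n))")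
  case True
  then show ?thesis unfolding graphon_law_eq
    by (subst emeasure_bind[OF space_UU_ne True A]) simp
next
  case False
  have "emeasure (graphon_law W n) A = 0"
    unfolding graphon_law_eq
  proof (rule bind_nonmeas_null[OF space_UU_ne _ _ _ False])
    show "sets (KK W n x) = sets (XS n)" for x by (rule sets_KK)
    show "subprob_space (KK W n x)" for x
      using prob_KK by (rule prob_space_imp_subprob_space)
    show "emeasure (UU n) (space (UU n)) \<noteq> 0"
      using prob_space.emeasure_space_1[OF prob_UU] by simp
  qed
  then show ?thesis by simp
qed

lemma sets_graphon: "sets (graphon_law W n) = sets (XS n)"
  unfolding graphon_law_eq by (rule sets_bind[OF _ space_UU_ne]) (rule sets_KK)

lemma space_graphon: "space (graphon_law W n) = space (XS n)"
  using sets_graphon by (rule sets_eq_imp_space_eq)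

lemma Unif_eq: "Unif = density lborel (\<lambda>x. ennreal (indicator {0..1::real} x))"
  unfolding uniform_measure_def by (auto intro!: density_cong simp: indicator_def)

lemma integral_Unif:
  fixes f :: "real \<Rightarrow> real"
  assumes f: "f \<in> borel_measurable borel"
  shows "integral\<^sup>L Unif f = (LBINT x=0..1. f x)"
proof -
  have "integral\<^sup>L Unif f = (\<integral>x. indicator {0..1::real} x *\<^sub>R f x \<partial>lborel)"
    unfolding Unif_eq using f by (subst integral_density) auto
  also have "\<dots> = (LBINT x:{0..1}. f x)" by (simp add: set_lebesgue_integral_def)
  also have "\<dots> = (LBINT x=0..1. f x)" using interval_integral_Icc[of 0 1 f] by (simp add: zero_ereal_def one_ereal_def)
  finally show ?thesis .
qed

lemma AE_Unif: "AE x in Unif. x \<in> {0..1}"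
  by (rule AE_uniform_measureI) auto

lemma AE_UU: "AE u in UU n. \<forall>i<n. u i \<in> {0..1}"
proof -
  have "AE u in UU n. u i \<in> {0..1}" if "i < n" for i
    unfolding UU_def using that by (intro AE_PiM_component[of "{..<n}" "\<lambda>_. Unif"] prob_Unif AE_Unif) auto
  then show ?thesis by (subst AE_all_countable) (auto intro: AE_mp)
qed


definition Jset :: "nat \<Rightarrow> nat \<Rightarrow> (nat \<times> nat) set" where
  "Jset n i = (\<lambda>l. (min i l, max i l)) ` ({..<n} - {i})"

lemma inj_J: "inj_on (\<lambda>l. (min i l, max i l)) ({..<n} - {i})"
  by (auto simp: inj_on_def min_def max_def split: if_splits)

lemma card_J: "card (Jset n i) = card ({..<n} - {i})"
  unfolding Jset_def by (rule card_image[OF inj_J])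

lemma J_sub: "i < n \<Longrightarrow> Jset n i \<subseteq> PS n"
  by (auto simp: Jset_def PS_def min_def max_def)

lemma finite_PS: "finite (PS n)"
  by (rule finite_subset[of _ "{..<n} \<times> {..<n}"]) (auto simp: PS_def)

lemma deg_as_sum:
  assumes i: "i < n"
  shows "deg n x i = (\<Sum>p\<in>Jset n i. if x p then 1 else 0)"
proof -
  have "deg n x i = adj x i i + (\<Sum>l\<in>{..<n} - {i}. adj x i l)"
    unfolding deg_def using i by (subst sum.remove[of _ i]) auto
  also have "\<dots> = (\<Sum>l\<in>{..<n} - {i}. if x (min i l, max i l) then 1 else 0)"
    unfolding adj_diag add_0_left by (intro sum.cong refl) (auto simp: adj_def min_def max_def)
  also have "\<dots> = (\<Sum>p\<in>Jset n i. if x p then 1 else 0)"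
    unfolding Jset_def by (subst sum.reindex[OF inj_J]) (simp add: o_def)
  finally show ?thesis .
qed

lemma deg_hoeffding:
  assumes Wr: "\<And>x y. x \<in> {0..1} \<Longrightarrow> y \<in> {0..1} \<Longrightarrow> W x y \<in> {0..1}"
    and Ws: "\<And>x y. x \<in> {0..1} \<Longrightarrow> y \<in> {0..1} \<Longrightarrow> W x y = W y x"
    and u: "\<And>l. l < n \<Longrightarrow> u l \<in> {0..1}" and n: "n \<ge> 2" and i: "i < n" and eps: "\<epsilon> \<ge> 0"
  shows "measure (KK W n u) {g \<in> space (KK W n u). \<bar>deg n g i - (\<Sum>l\<in>{..<n} - {i}. W (u i) (u l))\<bar> \<ge> \<epsilon>}
           \<le> 2 * exp (- 2 * \<epsilon>\<^sup>2 / real (n - 1))"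
proof -
  let ?M = "\<lambda>p. measure_pmf (bernoulli_pmf (W (u (fst p)) (u (snd p))))"
  have ne: "Jset n i \<noteq> {}"
  proof -
    have "(if i = 0 then 1 else 0) \<in> {..<n} - {i}" using n i by auto
    then show ?thesis by (auto simp: Jset_def)
  qed
  have cardJ: "card (Jset n i) = n - 1" using i by (simp add: card_J)
  have H: "measure (PiM (PS n) ?M) {x \<in> space (PiM (PS n) ?M).
      \<bar>(\<Sum>p\<in>Jset n i. (\<lambda>b. if b then 1 else (0::real)) (x p)) - (\<Sum>p\<in>Jset n i. integral\<^sup>L (?M p) (\<lambda>b. if b then 1 else (0::real)))\<bar> \<ge> \<epsilon>}
      \<le> 2 * exp (- 2 * \<epsilon>\<^sup>2 / (real (card (Jset n i)) * (1 - 0)\<^sup>2))"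
    by (rule hoeffding_PiM[OF _ J_sub[OF i] ne]) (auto simp: finite_PS eps intro: measure_pmf.prob_space_axioms)
  have E: "(\<Sum>p\<in>Jset n i. integral\<^sup>L (?M p) (\<lambda>b. if b then 1 else (0::real))) = (\<Sum>l\<in>{..<n} - {i}. W (u i) (u l))"
  proof -
    have "(\<Sum>p\<in>Jset n i. integral\<^sup>L (?M p) (\<lambda>b. if b then 1 else (0::real))) = (\<Sum>p\<in>Jset n i. W (u (fst p)) (u (snd p)))"
    proof (intro sum.cong refl)
      fix p assume p: "p \<in> Jset n i"
      then have "fst p < n" "snd p < n" using J_sub[OF i] by (auto simp: PS_def)
      then have "W (u (fst p)) (u (snd p)) \<in> {0..1}" using Wr u by auto
      then show "integral\<^sup>L (?M p) (\<lambda>b. if b then 1 else (0::real)) = W (u (fst p)) (u (snd p))" by simp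
    qed
    also have "\<dots> = (\<Sum>l\<in>{..<n} - {i}. W (u (min i l)) (u (max i l)))"
      unfolding Jset_def by (subst sum.reindex[OF inj_J]) (simp add: o_def)
    also have "\<dots> = (\<Sum>l\<in>{..<n} - {i}. W (u i) (u l))"
      using i u by (intro sum.cong refl) (auto simp: min_def max_def intro: Ws)
    finally show ?thesis .
  qed
  show ?thesis
    using H unfolding E cardJ KK_def[symmetric] by (simp add: deg_as_sum[OF i])
qed

lemma unif_hoeffding:
  fixes g :: "real \<Rightarrow> real"
  assumes g: "g \<in> borel_measurable borel" and gb: "\<And>x. x \<in> {0..1} \<Longrightarrow> g x \<in> {a..b}"
    and altb: "a < b" and n: "n \<ge> 1" and eps: "\<epsilon> \<ge> 0"
  shows "measure (UU n) {u \<in> space (UU n). \<bar>(\<Sum>l<n. g (u l)) - real n * (LBINT x=0..1. g x)\<bar> \<ge> \<epsilon>}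
           \<le> 2 * exp (- 2 * \<epsilon>\<^sup>2 / (real n * (b - a)\<^sup>2))"
proof -
  have ne: "{..<n} \<noteq> {}" using n by (auto simp: lessThan_empty_iff)
  have "AE x in Unif. g x \<in> {a..b}" using AE_Unif by eventually_elim (use gb in auto)
  then have H: "measure (PiM {..<n} (\<lambda>_. Unif)) {x \<in> space (PiM {..<n} (\<lambda>_. Unif)).
      \<bar>(\<Sum>l<n. g (x l)) - (\<Sum>l<n. integral\<^sup>L Unif g)\<bar> \<ge> \<epsilon>}
      \<le> 2 * exp (- 2 * \<epsilon>\<^sup>2 / (real (card {..<n}) * (b - a)\<^sup>2))"
    using g by (intro hoeffding_PiM[OF _ order.refl ne] prob_Unif altb eps) auto
  then show ?thesis unfolding UU_def[symmetric] integral_Unif[OF g] by simp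
qed


definition clamp :: "real \<Rightarrow> real" where "clamp x = max 0 (min 1 x)"

lemma clamp_01: "clamp x \<in> {0..1}" by (auto simp: clamp_def)
lemma clamp_id: "x \<in> {0..1} \<Longrightarrow> clamp x = x" by (auto simp: clamp_def)
lemma clamp_lip: "\<bar>clamp x - clamp y\<bar> \<le> \<bar>x - y\<bar>" by (auto simp: clamp_def)

lemma lip_cont:
  fixes g :: "real \<Rightarrow> real"
  assumes "\<And>x y. \<bar>g x - g y\<bar> \<le> K * \<bar>x - y\<bar>" "K \<ge> 0"
  shows "g \<in> borel_measurable borel"
proof -
  have "K-lipschitz_on UNIV g"
    by (rule lipschitz_onI) (use assms in \<open>auto simp: dist_real_def\<close>)
  then show ?thesis by (intro borel_measurable_continuous_onI lipschitz_on_continuous_on)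
qed

locale gset =
  fixes W :: "real \<Rightarrow> real \<Rightarrow> real" and L :: real and f :: "real poly"
  assumes W_range: "\<And>x y. x \<in> {0..1} \<Longrightarrow> y \<in> {0..1} \<Longrightarrow> W x y \<in> {0..1}"
    and W_sym: "\<And>x y. x \<in> {0..1} \<Longrightarrow> y \<in> {0..1} \<Longrightarrow> W x y = W y x"
    and W_lip: "\<And>x y x' y'. x \<in> {0..1} \<Longrightarrow> y \<in> {0..1} \<Longrightarrow> x' \<in> {0..1} \<Longrightarrow> y' \<in> {0..1} \<Longrightarrow>
                  \<bar>W x y - W x' y'\<bar> \<le> L * (\<bar>x - x'\<bar> + \<bar>y - y'\<bar>)"
begin

lemma L_nonneg: "L \<ge> 0"
  using W_lip[of 0 0 1 0] by auto

definition Wc :: "real \<Rightarrow> real \<Rightarrow> real" where "Wc x y = W (clamp x) (clamp y)"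

lemma Wc_range: "Wc x y \<in> {0..1}" unfolding Wc_def by (intro W_range clamp_01)

lemma Wc_eq: "x \<in> {0..1} \<Longrightarrow> y \<in> {0..1} \<Longrightarrow> Wc x y = W x y" by (simp add: Wc_def clamp_id)

lemma Wc_lip: "\<bar>Wc x y - Wc x' y'\<bar> \<le> L * (\<bar>x - x'\<bar> + \<bar>y - y'\<bar>)"
proof -
  have "\<bar>Wc x y - Wc x' y'\<bar> \<le> L * (\<bar>clamp x - clamp x'\<bar> + \<bar>clamp y - clamp y'\<bar>)"
    unfolding Wc_def by (intro W_lip clamp_01)
  also have "\<dots> \<le> L * (\<bar>x - x'\<bar> + \<bar>y - y'\<bar>)"
    using L_nonneg clamp_lip[of x x'] clamp_lip[of y y'] by (intro mult_left_mono) auto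
  finally show ?thesis .
qed

lemma Wc_meas: "Wc x \<in> borel_measurable borel"
  by (rule lip_cont[of _ L]) (use Wc_lip[of x _ x] L_nonneg in auto)

lemma Wc_int: "integrable Unif (Wc x)"
proof -
  interpret prob_space Unif by (rule prob_Unif)
  show ?thesis
    by (rule integrable_const_bound[where B=1]) (use Wc_range Wc_meas in auto)
qed

definition dl :: "real \<Rightarrow> real" where "dl x = integral\<^sup>L Unif (Wc x)"

lemma dl_range: "dl x \<in> {0..1}"
proof -
  interpret prob_space Unif by (rule prob_Unif)
  have "0 \<le> dl x" unfolding dl_def by (rule integral_nonneg_AE) (use Wc_range in auto)
  moreover have "dl x \<le> integral\<^sup>L Unif (\<lambda>_. 1)"
    unfolding dl_def by (rule integral_mono[OF Wc_int]) (use Wc_range in auto)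
  ultimately show ?thesis by simp
qed

lemma dl_lip: "\<bar>dl x - dl x'\<bar> \<le> L * \<bar>x - x'\<bar>"
proof -
  interpret prob_space Unif by (rule prob_Unif)
  have "\<bar>dl x - dl x'\<bar> = \<bar>integral\<^sup>L Unif (\<lambda>y. Wc x y - Wc x' y)\<bar>"
    unfolding dl_def by (simp add: Wc_int)
  also have "\<dots> \<le> integral\<^sup>L Unif (\<lambda>y. \<bar>Wc x y - Wc x' y\<bar>)"
    by (rule integral_abs_bound[simplified real_norm_def])
  also have "\<dots> \<le> integral\<^sup>L Unif (\<lambda>y. L * \<bar>x - x'\<bar>)"
  proof (rule integral_mono)
    show "integrable Unif (\<lambda>y. \<bar>Wc x y - Wc x' y\<bar>)" using Wc_int by auto
    show "\<bar>Wc x y - Wc x' y\<bar> \<le> L * \<bar>x - x'\<bar>" for y using Wc_lip[of x y x' y] by simp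
  qed simp
  also have "\<dots> = L * \<bar>x - x'\<bar>" by simp
  finally show ?thesis .
qed

lemma dl_meas: "dl \<in> borel_measurable borel"
  by (rule lip_cont[OF dl_lip L_nonneg])

lemma graphon_degree_eq: "x \<in> {0..1} \<Longrightarrow> graphon_degree W x = dl x"
proof -
  assume x: "x \<in> {0..1}"
  have "dl x = (LBINT y=0..1. Wc x y)" unfolding dl_def by (rule integral_Unif[OF Wc_meas])
  also have "\<dots> = (LBINT y=0..1. W x y)"
    using x by (intro interval_integral_cong) (auto simp: Wc_eq einterval_iff zero_ereal_def one_ereal_def)
  finally show ?thesis by (simp add: graphon_degree_def)
qed

definition cc :: real where "cc = (LBINT x=0..1. graphon_degree W x * (poly f (graphon_degree W x))\<^sup>2)"

lemma cc_eq: "cc = (LBINT x=0..1. phi f (dl x))"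
  unfolding cc_def phi_def
  by (intro interval_integral_cong) (auto simp: graphon_degree_eq einterval_iff zero_ereal_def one_ereal_def)

end


lemma pow_lip: "x \<in> {0..1} \<Longrightarrow> y \<in> {0..1} \<Longrightarrow> \<bar>x ^ k - y ^ k\<bar> \<le> real k * \<bar>x - y\<bar>"
proof (induction k)
  case 0 then show ?case by simp
next
  case (Suc k)
  have "x ^ Suc k - y ^ Suc k = x * (x ^ k - y ^ k) + y ^ k * (x - y)" by (simp add: algebra_simps)
  then have "\<bar>x ^ Suc k - y ^ Suc k\<bar> \<le> \<bar>x\<bar> * \<bar>x ^ k - y ^ k\<bar> + \<bar>y ^ k\<bar> * \<bar>x - y\<bar>"
    by (metis abs_mult abs_triangle_ineq)
  also have "\<dots> \<le> 1 * (real k * \<bar>x - y\<bar>) + 1 * \<bar>x - y\<bar>"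
    using Suc by (intro add_mono mult_mono) (auto simp: power_le_one abs_le_iff)
  finally show ?case by (simp add: algebra_simps)
qed

definition Lphi :: "real poly \<Rightarrow> real" where
  "Lphi f = (\<Sum>p\<le>degree f. \<Sum>q\<le>degree f. \<bar>coeff f p * coeff f q\<bar> * real (p + q + 1))"

definition Bphi :: "real poly \<Rightarrow> real" where
  "Bphi f = 1 + (\<Sum>p\<le>degree f. \<Sum>q\<le>degree f. \<bar>coeff f p * coeff f q\<bar>)"

lemma Lphi_nonneg: "Lphi f \<ge> 0" unfolding Lphi_def by (intro sum_nonneg) auto
lemma Bphi_ge1: "Bphi f \<ge> 1" unfolding Bphi_def by (auto intro!: sum_nonneg)

lemma phi_lip: "x \<in> {0..1} \<Longrightarrow> y \<in> {0..1} \<Longrightarrow> \<bar>phi f x - phi f y\<bar> \<le> Lphi f * \<bar>x - y\<bar>"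
proof -
  assume xy: "x \<in> {0..1}" "y \<in> {0..1}"
  have "\<bar>phi f x - phi f y\<bar> = \<bar>\<Sum>p\<le>degree f. \<Sum>q\<le>degree f. coeff f p * coeff f q * (x ^ (p + q + 1) - y ^ (p + q + 1))\<bar>"
    unfolding phi_expand by (simp add: sum_subtractf right_diff_distrib)
  also have "\<dots> \<le> (\<Sum>p\<le>degree f. \<Sum>q\<le>degree f. \<bar>coeff f p * coeff f q\<bar> * (real (p + q + 1) * \<bar>x - y\<bar>))"
  proof (rule order.trans[OF sum_abs], intro sum_mono, rule order.trans[OF sum_abs], intro sum_mono)
    fix p q
    show "\<bar>coeff f p * coeff f q * (x ^ (p + q + 1) - y ^ (p + q + 1))\<bar>
      \<le> \<bar>coeff f p * coeff f q\<bar> * (real (p + q + 1) * \<bar>x - y\<bar>)"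
      unfolding abs_mult[of "coeff f p * coeff f q"] by (rule mult_left_mono[OF pow_lip[OF xy]]) simp
  qed
  also have "\<dots> = Lphi f * \<bar>x - y\<bar>"
    by (simp add: Lphi_def sum_distrib_right sum_distrib_left mult_ac)
  finally show ?thesis .
qed

lemma phi_bound: "x \<in> {0..1} \<Longrightarrow> \<bar>phi f x\<bar> \<le> Bphi f"
proof -
  assume x: "x \<in> {0..1}"
  have "\<bar>phi f x\<bar> \<le> (\<Sum>p\<le>degree f. \<Sum>q\<le>degree f. \<bar>coeff f p * coeff f q\<bar> * 1)"
    unfolding phi_expand
  proof (rule order.trans[OF sum_abs], intro sum_mono, rule order.trans[OF sum_abs], intro sum_mono)
    fix p q
    have "\<bar>x ^ (p + q + 1)\<bar> \<le> 1" using x by (metis abs_of_nonneg atLeastAtMost_iff power_le_one zero_le_power)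
    then show "\<bar>coeff f p * coeff f q * x ^ (p + q + 1)\<bar> \<le> \<bar>coeff f p * coeff f q\<bar> * 1"
      unfolding abs_mult[of "coeff f p * coeff f q"] by (intro mult_left_mono) auto
  qed
  then show ?thesis by (simp add: Bphi_def)
qed

lemma phi_meas: "(\<lambda>x. phi f (g x)) \<in> borel_measurable M" if "g \<in> borel_measurable M"
  unfolding phi_expand using that by measurable

context gset
begin

lemma deg_close:
  fixes K :: nat and n :: nat and \<tau> :: real
  assumes n: "n \<ge> 1" and K: "K \<ge> 1" and u: "\<And>l. l < n \<Longrightarrow> u l \<in> {0..1}"
    and grid: "\<And>m. m \<le> K \<Longrightarrow> \<bar>(\<Sum>l<n. Wc (real m / real K) (u l)) - real n * dl (real m / real K)\<bar> < real n * \<tau>"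
    and degs: "\<bar>deg n g i - (\<Sum>l\<in>{..<n} - {i}. W (u i) (u l))\<bar> < real n * \<tau>"
    and i: "i < n"
  shows "\<bar>deg n g i / real n - dl (u i)\<bar> \<le> 2 * \<tau> + 1 / real n + 2 * L / real K"
proof -
  define m where "m = nat \<lfloor>u i * real K\<rfloor>"
  have ui: "u i \<in> {0..1}" using u i by auto
  have fl: "real m \<le> u i * real K" "u i * real K < real m + 1"
    using ui unfolding m_def by (auto simp: of_nat_nat)
  have mK: "m \<le> K"
  proof -
    have "u i * real K \<le> 1 * real K" using ui by (intro mult_right_mono) auto
    then have "real m \<le> real K" using fl by linarith
    then show ?thesis by simp
  qed
  define xm where "xm = real m / real K"
  have Kpos: "real K > 0" using K by simp
  have dist: "\<bar>u i - xm\<bar> \<le> 1 / real K"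
  proof -
    have eq: "u i - xm = (u i * real K - real m) / real K" using Kpos by (simp add: xm_def field_simps)
    have "0 \<le> (u i * real K - real m) / real K" using fl Kpos by simp
    moreover have "(u i * real K - real m) / real K \<le> 1 / real K" using fl Kpos by (intro divide_right_mono) auto
    ultimately show ?thesis unfolding eq by simp
  qed
  have S1: "(\<Sum>l\<in>{..<n} - {i}. W (u i) (u l)) = (\<Sum>l<n. Wc (u i) (u l)) - Wc (u i) (u i)"
  proof -
    have "(\<Sum>l<n. Wc (u i) (u l)) = Wc (u i) (u i) + (\<Sum>l\<in>{..<n} - {i}. Wc (u i) (u l))"
      using i by (subst sum.remove[of _ i]) auto
    moreover have "(\<Sum>l\<in>{..<n} - {i}. Wc (u i) (u l)) = (\<Sum>l\<in>{..<n} - {i}. W (u i) (u l))"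
      using u ui by (intro sum.cong refl Wc_eq) auto
    ultimately show ?thesis by simp
  qed
  have S2: "\<bar>(\<Sum>l<n. Wc (u i) (u l)) - (\<Sum>l<n. Wc xm (u l))\<bar> \<le> real n * (L / real K)"
  proof -
    have "\<bar>(\<Sum>l<n. Wc (u i) (u l)) - (\<Sum>l<n. Wc xm (u l))\<bar> \<le> (\<Sum>l<n. \<bar>Wc (u i) (u l) - Wc xm (u l)\<bar>)"
      by (subst sum_subtractf[symmetric]) (rule sum_abs)
    also have "\<dots> \<le> (\<Sum>l<n. L / real K)"
    proof (intro sum_mono)
      fix l
      have "\<bar>Wc (u i) (u l) - Wc xm (u l)\<bar> \<le> L * \<bar>u i - xm\<bar>" using Wc_lip[of "u i" "u l" xm "u l"] by simp
      also have "\<dots> \<le> L * (1 / real K)" using dist L_nonneg by (intro mult_left_mono) auto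
      finally show "\<bar>Wc (u i) (u l) - Wc xm (u l)\<bar> \<le> L / real K" by simp
    qed
    finally show ?thesis by simp
  qed
  have S3: "\<bar>(\<Sum>l<n. Wc xm (u l)) - real n * dl xm\<bar> < real n * \<tau>"
    using grid[OF mK] unfolding xm_def .
  have S4: "\<bar>dl xm - dl (u i)\<bar> \<le> L / real K"
  proof -
    have "\<bar>dl xm - dl (u i)\<bar> \<le> L * \<bar>xm - u i\<bar>" by (rule dl_lip)
    also have "\<dots> \<le> L * (1 / real K)" using dist L_nonneg by (intro mult_left_mono) auto
    finally show ?thesis by simp
  qed
  have W01: "Wc (u i) (u i) \<in> {0..1}" by (rule Wc_range)
  have "\<bar>deg n g i - real n * dl (u i)\<bar> \<le> real n * \<tau> + 1 + real n * (L / real K) + real n * \<tau> + real n * (L / real K)"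
  proof -
    have "\<bar>real n * dl xm - real n * dl (u i)\<bar> \<le> real n * (L / real K)"
    proof -
      have "\<bar>real n * dl xm - real n * dl (u i)\<bar> = real n * \<bar>dl xm - dl (u i)\<bar>"
        by (simp add: right_diff_distrib[symmetric] abs_mult)
      also have "\<dots> \<le> real n * (L / real K)" using S4 by (intro mult_left_mono) auto
      finally show ?thesis .
    qed
    then show ?thesis using degs S1 S2 S3 W01
      unfolding abs_le_iff abs_less_iff atLeastAtMost_iff by linarith
  qed
  then have "\<bar>deg n g i - real n * dl (u i)\<bar> / real n \<le> (real n * \<tau> + 1 + real n * (L / real K) + real n * \<tau> + real n * (L / real K)) / real n"
    by (intro divide_right_mono) auto
  moreover have "\<bar>deg n g i - real n * dl (u i)\<bar> / real n = \<bar>deg n g i / real n - dl (u i)\<bar>"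
    using n by (simp add: field_simps)
  moreover have "(real n * \<tau> + 1 + real n * (L / real K) + real n * \<tau> + real n * (L / real K)) / real n
      = 2 * \<tau> + 1 / real n + 2 * L / real K"
    using n by (simp add: field_simps)
  ultimately show ?thesis by simp
qed

end


context gset
begin

lemma combine_det:
  fixes n K :: nat and \<tau> \<tau>' :: real
  assumes n: "n \<ge> 1" and K: "K \<ge> 1" and u: "\<And>l. l < n \<Longrightarrow> u l \<in> {0..1}"
    and grid: "\<And>m. m \<le> K \<Longrightarrow> \<bar>(\<Sum>l<n. Wc (real m / real K) (u l)) - real n * dl (real m / real K)\<bar> < real n * \<tau>"
    and H1: "\<bar>(\<Sum>l<n. phi f (dl (u l))) - real n * cc\<bar> < real n * \<tau>'"
    and degs: "\<And>i. i < n \<Longrightarrow> \<bar>deg n g i - (\<Sum>l\<in>{..<n} - {i}. W (u i) (u l))\<bar> < real n * \<tau>"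
  shows "\<bar>mtrace n (Bm n f g) / real n - cc\<bar> < Kf f / real n + Lphi f * (2 * \<tau> + 1 / real n + 2 * L / real K) + \<tau>'"
proof -
  define \<rho> where "\<rho> = 2 * \<tau> + 1 / real n + 2 * L / real K"
  have close: "\<bar>phi f (deg n g i / real n) - phi f (dl (u i))\<bar> \<le> Lphi f * \<rho>" if i: "i < n" for i
  proof -
    have d01: "deg n g i / real n \<in> {0..1}" using deg_nonneg[of n g i] deg_le[of n g i] n
      by (auto simp: divide_le_eq_1)
    have "\<bar>phi f (deg n g i / real n) - phi f (dl (u i))\<bar> \<le> Lphi f * \<bar>deg n g i / real n - dl (u i)\<bar>"
      by (rule phi_lip[OF d01 dl_range])
    also have "\<dots> \<le> Lphi f * \<rho>"
      unfolding \<rho>_def by (intro mult_left_mono Lphi_nonneg deg_close[OF n K u grid degs[OF i] i]) auto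
    finally show ?thesis .
  qed
  have sum_close: "\<bar>(\<Sum>i<n. phi f (deg n g i / real n)) - (\<Sum>i<n. phi f (dl (u i)))\<bar> \<le> real n * (Lphi f * \<rho>)"
  proof -
    have "\<bar>(\<Sum>i<n. phi f (deg n g i / real n)) - (\<Sum>i<n. phi f (dl (u i)))\<bar>
        \<le> (\<Sum>i<n. \<bar>phi f (deg n g i / real n) - phi f (dl (u i))\<bar>)"
      by (subst sum_subtractf[symmetric]) (rule sum_abs)
    also have "\<dots> \<le> (\<Sum>i<n. Lphi f * \<rho>)" by (intro sum_mono close) auto
    finally show ?thesis by simp
  qed
  have SA: "\<bar>mtrace n (Bm n f g) - (\<Sum>i<n. phi f (deg n g i / real n))\<bar> \<le> Kf f"
    unfolding Bm_def by (rule S_approx)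
  have "\<bar>mtrace n (Bm n f g) - real n * cc\<bar> < Kf f + real n * (Lphi f * \<rho>) + real n * \<tau>'"
    using SA sum_close H1 unfolding abs_le_iff abs_less_iff by linarith
  then have "\<bar>mtrace n (Bm n f g) - real n * cc\<bar> / real n < (Kf f + real n * (Lphi f * \<rho>) + real n * \<tau>') / real n"
    using n by (intro divide_strict_right_mono) auto
  moreover have "\<bar>mtrace n (Bm n f g) - real n * cc\<bar> / real n = \<bar>mtrace n (Bm n f g) / real n - cc\<bar>"
    using n by (simp add: field_simps)
  moreover have "(Kf f + real n * (Lphi f * \<rho>) + real n * \<tau>') / real n = Kf f / real n + Lphi f * \<rho> + \<tau>'"
    using n by (simp add: field_simps)
  ultimately show ?thesis by (simp add: \<rho>_def)
qed

end


lemma deg_meas_KK: "i < n \<Longrightarrow> (\<lambda>g. deg n g i) \<in> borel_measurable (KK W n u)"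
  using deg_meas[of i n] by (simp add: measurable_cong_sets[OF sets_KK refl])

lemma exp_bound_aux:
  assumes n: "n \<ge> 2" and tau: "\<tau> > 0"
  shows "exp (- 2 * (real n * \<tau>)\<^sup>2 / real (n - 1)) \<le> exp (- 2 * real n * \<tau>\<^sup>2)"
proof -
  have n1: "real (n - 1) > 0" "real (n - 1) \<le> real n" using n by auto
  have "2 * real n * \<tau>\<^sup>2 = 2 * (real n * \<tau>)\<^sup>2 / real n" using n by (simp add: power2_eq_square)
  also have "\<dots> \<le> 2 * (real n * \<tau>)\<^sup>2 / real (n - 1)"
    using n1 by (intro divide_left_mono) auto
  finally show ?thesis by simp
qed

context gset
begin

lemma kk_bound:
  assumes n: "n \<ge> 2" and u: "\<And>l. l < n \<Longrightarrow> u l \<in> {0..1}" and tau: "\<tau> > 0"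
  shows "emeasure (KK W n u) {g \<in> space (KK W n u). \<exists>i<n. real n * \<tau> \<le> \<bar>deg n g i - (\<Sum>l\<in>{..<n} - {i}. W (u i) (u l))\<bar>}
    \<le> ennreal (real n * (2 * exp (- 2 * real n * \<tau>\<^sup>2)))"
proof -
  interpret K: prob_space "KK W n u" by (rule prob_KK)
  define Bd where "Bd i = {g \<in> space (KK W n u). real n * \<tau> \<le> \<bar>deg n g i - (\<Sum>l\<in>{..<n} - {i}. W (u i) (u l))\<bar>}" for i
  have Bd_sets: "Bd i \<in> sets (KK W n u)" if "i < n" for i
    unfolding Bd_def using deg_meas_KK[OF that] by measurable
  have eq: "{g \<in> space (KK W n u). \<exists>i<n. real n * \<tau> \<le> \<bar>deg n g i - (\<Sum>l\<in>{..<n} - {i}. W (u i) (u l))\<bar>} = (\<Union>i\<in>{..<n}. Bd i)"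
    by (auto simp: Bd_def)
  have "K.prob (\<Union>i\<in>{..<n}. Bd i) \<le> (\<Sum>i<n. K.prob (Bd i))"
    using Bd_sets by (intro K.finite_measure_subadditive_finite) auto
  also have "\<dots> \<le> (\<Sum>i<n. 2 * exp (- 2 * real n * \<tau>\<^sup>2))"
  proof (intro sum_mono)
    fix i assume i: "i \<in> {..<n}"
    have "K.prob (Bd i) \<le> 2 * exp (- 2 * (real n * \<tau>)\<^sup>2 / real (n - 1))"
      unfolding Bd_def using tau
      by (intro deg_hoeffding W_range W_sym u n) (use i in auto)
    also have "\<dots> \<le> 2 * exp (- 2 * real n * \<tau>\<^sup>2)" using exp_bound_aux[OF n tau] by simp
    finally show "K.prob (Bd i) \<le> 2 * exp (- 2 * real n * \<tau>\<^sup>2)" .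
  qed
  finally show ?thesis unfolding eq K.emeasure_eq_measure by (simp add: ennreal_leI)
qed

end


lemma comp_meas_UU: "l < n \<Longrightarrow> (\<lambda>u. u l) \<in> borel_measurable (UU n)"
proof -
  assume l: "l < n"
  have "(\<lambda>u. u l) \<in> measurable (UU n) Unif" unfolding UU_def using l by simp
  moreover have "measurable (UU n) Unif = measurable (UU n) borel" by (rule measurable_cong_sets) auto
  ultimately show ?thesis by simp
qed

context gset
begin

lemma phi_dl_meas: "(\<lambda>x. phi f (dl x)) \<in> borel_measurable borel"
  by (rule phi_meas[OF dl_meas])

lemma uu_bound:
  fixes K n :: nat and \<tau> \<tau>' :: real
  assumes n: "n \<ge> 1" and K: "K \<ge> 1" and tau: "\<tau> > 0" and tau': "\<tau>' > 0"
  defines "Bs \<equiv> {u \<in> space (UU n). real n * \<tau>' \<le> \<bar>(\<Sum>l<n. phi f (dl (u l))) - real n * cc\<bar>}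
      \<union> (\<Union>m\<in>{..K}. {u \<in> space (UU n). real n * \<tau> \<le> \<bar>(\<Sum>l<n. Wc (real m / real K) (u l)) - real n * dl (real m / real K)\<bar>})"
  shows "Bs \<in> sets (UU n)"
    and "emeasure (UU n) Bs \<le> ennreal (2 * exp (- 2 * (real n * \<tau>')\<^sup>2 / (real n * (Bphi f - - Bphi f)\<^sup>2))
            + real (Suc K) * (2 * exp (- 2 * (real n * \<tau>)\<^sup>2 / (real n * (1 - 0)\<^sup>2))))"
proof -
  interpret P: prob_space "UU n" by (rule prob_UU)
  define H1 where "H1 = {u \<in> space (UU n). real n * \<tau>' \<le> \<bar>(\<Sum>l<n. phi f (dl (u l))) - real n * cc\<bar>}"
  define H2 where "H2 m = {u \<in> space (UU n). real n * \<tau> \<le> \<bar>(\<Sum>l<n. Wc (real m / real K) (u l)) - real n * dl (real m / real K)\<bar>}" for m :: nat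
  have m1: "(\<lambda>u. phi f (dl (u l))) \<in> borel_measurable (UU n)" if "l < n" for l
    using measurable_compose[OF comp_meas_UU[OF that] phi_dl_meas] .
  have m2: "(\<lambda>u. Wc x (u l)) \<in> borel_measurable (UU n)" if "l < n" for l x
    using measurable_compose[OF comp_meas_UU[OF that] Wc_meas] .
  have H1s: "H1 \<in> sets (UU n)" unfolding H1_def using m1 by measurable
  have H2s: "H2 m \<in> sets (UU n)" for m unfolding H2_def using m2 by measurable
  have Bs_eq: "Bs = H1 \<union> (\<Union>m\<in>{..K}. H2 m)" unfolding Bs_def H1_def H2_def by simp
  show "Bs \<in> sets (UU n)" unfolding Bs_eq using H1s H2s by auto
  have b1: "P.prob H1 \<le> 2 * exp (- 2 * (real n * \<tau>')\<^sup>2 / (real n * (Bphi f - - Bphi f)\<^sup>2))"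
  proof -
    have "LBINT x=0..1. phi f (dl x) = cc" by (simp add: cc_eq)
    moreover have "phi f (dl x) \<in> {- Bphi f..Bphi f}" for x
      using phi_bound[OF dl_range, of f x] by (auto simp: abs_le_iff)
    moreover have "- Bphi f < Bphi f" using Bphi_ge1[of f] by simp
    ultimately show ?thesis
      using unif_hoeffding[where a="- Bphi f" and b="Bphi f" and \<epsilon>="real n * \<tau>'", OF phi_dl_meas _ _ n] tau' n
      unfolding H1_def by simp
  qed
  have b2: "P.prob (H2 m) \<le> 2 * exp (- 2 * (real n * \<tau>)\<^sup>2 / (real n * (1 - 0)\<^sup>2))" for m
  proof -
    have "(LBINT y=0..1. Wc (real m / real K) y) = dl (real m / real K)"
      unfolding dl_def by (rule integral_Unif[OF Wc_meas, symmetric])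
    then show ?thesis
      using unif_hoeffding[where g="Wc (real m / real K)" and a=0 and b=1 and \<epsilon>="real n * \<tau>", OF Wc_meas _ _ n] tau n Wc_range
      unfolding H2_def by simp
  qed
  define X1 where "X1 = 2 * exp (- 2 * (real n * \<tau>')\<^sup>2 / (real n * (Bphi f - - Bphi f)\<^sup>2))"
  define X2 where "X2 = 2 * exp (- 2 * (real n * \<tau>)\<^sup>2 / (real n * (1 - 0)\<^sup>2))"
  have e1: "emeasure (UU n) H1 \<le> ennreal X1"
    using b1 unfolding X1_def by (simp add: P.emeasure_eq_measure ennreal_leI)
  have "emeasure (UU n) (\<Union>m\<in>{..K}. H2 m) \<le> (\<Sum>m\<le>K. emeasure (UU n) (H2 m))"
    using H2s by (intro emeasure_subadditive_finite) auto
  also have "\<dots> \<le> (\<Sum>m\<le>K. ennreal X2)"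
    using b2 unfolding X2_def by (intro sum_mono) (simp add: P.emeasure_eq_measure ennreal_leI)
  also have "\<dots> = ennreal (real (Suc K) * X2)"
    by (subst ennreal_mult) (auto simp: X2_def ennreal_of_nat_eq_real_of_nat)
  finally have e2: "emeasure (UU n) (\<Union>m\<in>{..K}. H2 m) \<le> ennreal (real (Suc K) * X2)" .
  have "emeasure (UU n) Bs \<le> emeasure (UU n) H1 + emeasure (UU n) (\<Union>m\<in>{..K}. H2 m)"
    unfolding Bs_eq using H1s H2s by (intro emeasure_subadditive) auto
  also have "\<dots> \<le> ennreal X1 + ennreal (real (Suc K) * X2)" by (rule add_mono[OF e1 e2])
  also have "\<dots> = ennreal (X1 + real (Suc K) * X2)"
    by (rule ennreal_plus[symmetric]) (auto simp: X1_def X2_def)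
  finally show "emeasure (UU n) Bs \<le> ennreal (2 * exp (- 2 * (real n * \<tau>')\<^sup>2 / (real n * (Bphi f - - Bphi f)\<^sup>2))
            + real (Suc K) * (2 * exp (- 2 * (real n * \<tau>)\<^sup>2 / (real n * (1 - 0)\<^sup>2))))"
    unfolding X1_def X2_def .
qed

end


lemma Kf_nonneg: "Kf f \<ge> 0" unfolding Kf_def by (intro sum_nonneg) auto

context gset
begin

lemma param_arith:
  fixes t :: real and n K :: nat
  assumes t: "t > 0"
  defines "\<tau> \<equiv> t / (16 * (Lphi f + 1))"
  assumes K: "real K \<ge> 16 * L * (Lphi f + 1) / t" "K \<ge> 1"
    and n: "real n \<ge> 8 * (Kf f + Lphi f) / t" "n \<ge> 1"
  shows "Kf f / real n + Lphi f * (2 * \<tau> + 1 / real n + 2 * L / real K) + t / 4 < t"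
proof -
  have Lp: "Lphi f \<ge> 0" by (rule Lphi_nonneg)
  have Lp1: "Lphi f + 1 > 0" using Lp by simp
  have a1: "(Kf f + Lphi f) / real n \<le> t / 8"
  proof -
    have "8 * (Kf f + Lphi f) \<le> t * real n" using n t by (simp add: field_simps)
    then show ?thesis using n t by (simp add: field_simps)
  qed
  have a2: "Lphi f * (2 * \<tau>) \<le> t / 8"
  proof -
    have "Lphi f * (2 * \<tau>) = t / 8 * (Lphi f / (Lphi f + 1))" unfolding \<tau>_def using Lp1 by (simp add: field_simps)
    also have "\<dots> \<le> t / 8 * 1" using t Lp Lp1 by (intro mult_left_mono) auto
    finally show ?thesis by simp
  qed
  have a3: "Lphi f * (2 * L / real K) \<le> t / 8"
  proof -
    have Kp: "real K > 0" using K by simp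
    have "16 * L * (Lphi f + 1) \<le> real K * t" using K t by (simp add: field_simps)
    moreover have "16 * (Lphi f * L) \<le> 16 * L * (Lphi f + 1)" using L_nonneg by (simp add: algebra_simps)
    ultimately have "16 * (Lphi f * L) \<le> real K * t" by linarith
    then show ?thesis using Kp by (simp add: field_simps)
  qed
  have "Kf f / real n + Lphi f * (2 * \<tau> + 1 / real n + 2 * L / real K) + t / 4
      = (Kf f + Lphi f) / real n + Lphi f * (2 * \<tau>) + Lphi f * (2 * L / real K) + t / 4"
    by (simp add: algebra_simps add_divide_distrib)
  also have "\<dots> \<le> t / 8 + t / 8 + t / 8 + t / 4" using a1 a2 a3 by linarith
  also have "\<dots> < t" using t by simp
  finally show ?thesis .
qed

lemma graph_part:
  assumes t: "t > 0"
  shows "\<exists>N C a. a > 0 \<and> C \<ge> 0 \<and> (\<forall>n\<ge>N. emeasure (graphon_law W n)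
      {g \<in> space (XS n). t \<le> \<bar>mtrace n (Bm n f g) / real n - cc\<bar>} \<le> ennreal (2 * (real n + C) * exp (- a * real n)))"
proof -
  define \<tau> where "\<tau> = t / (16 * (Lphi f + 1))"
  define \<tau>' where "\<tau>' = t / 4"
  define K where "K = nat \<lceil>16 * L * (Lphi f + 1) / t\<rceil> + 1"
  define N where "N = nat \<lceil>8 * (Kf f + Lphi f) / t\<rceil> + 2"
  define a where "a = min (2 * \<tau>\<^sup>2) (\<tau>'\<^sup>2 / (2 * (Bphi f)\<^sup>2))"
  define C where "C = real K + 2"
  have Lp1: "Lphi f + 1 > 0" using Lphi_nonneg[of f] by simp
  have tau: "\<tau> > 0" unfolding \<tau>_def using t Lp1 by simp
  have tau': "\<tau>' > 0" unfolding \<tau>'_def using t by simp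
  have Bp: "Bphi f \<ge> 1" by (rule Bphi_ge1)
  have apos: "a > 0" unfolding a_def using tau tau' Bp by auto
  have K1: "K \<ge> 1" unfolding K_def by simp
  have KL: "real K \<ge> 16 * L * (Lphi f + 1) / t" unfolding K_def by linarith
  have bound: "emeasure (graphon_law W n) {g \<in> space (XS n). t \<le> \<bar>mtrace n (Bm n f g) / real n - cc\<bar>}
      \<le> ennreal (2 * (real n + C) * exp (- a * real n))" if nN: "n \<ge> N" for n
  proof -
    have n2: "n \<ge> 2" using nN unfolding N_def by simp
    have n1: "n \<ge> 1" using n2 by simp
    have nbig: "real n \<ge> 8 * (Kf f + Lphi f) / t"
    proof -
      have "real N \<ge> 8 * (Kf f + Lphi f) / t" unfolding N_def by linarith
      moreover have "real N \<le> real n" using nN by simp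
      ultimately show ?thesis by linarith
    qed
    have arith: "Kf f / real n + Lphi f * (2 * \<tau> + 1 / real n + 2 * L / real K) + \<tau>' < t"
      unfolding \<tau>_def \<tau>'_def by (rule param_arith[OF t KL K1 nbig n1])
    define A where "A = {g \<in> space (XS n). t \<le> \<bar>mtrace n (Bm n f g) / real n - cc\<bar>}"
    have As: "A \<in> sets (XS n)"
      unfolding A_def using mtrace_meas[OF Bm_meas[of n f]] by measurable
    define Bs where "Bs = {u \<in> space (UU n). real n * \<tau>' \<le> \<bar>(\<Sum>l<n. phi f (dl (u l))) - real n * cc\<bar>}
      \<union> (\<Union>m\<in>{..K}. {u \<in> space (UU n). real n * \<tau> \<le> \<bar>(\<Sum>l<n. Wc (real m / real K) (u l)) - real n * dl (real m / real K)\<bar>})"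
    have Bss: "Bs \<in> sets (UU n)" unfolding Bs_def by (rule uu_bound(1)[OF n1 K1 tau tau'])
    have Bsm: "emeasure (UU n) Bs \<le> ennreal (2 * exp (- 2 * (real n * \<tau>')\<^sup>2 / (real n * (Bphi f - - Bphi f)\<^sup>2))
            + real (Suc K) * (2 * exp (- 2 * (real n * \<tau>)\<^sup>2 / (real n * (1 - 0)\<^sup>2))))"
      unfolding Bs_def by (rule uu_bound(2)[OF n1 K1 tau tau'])
    define E1 where "E1 = real n * (2 * exp (- 2 * real n * \<tau>\<^sup>2))"
    have pw: "emeasure (KK W n u) A \<le> ennreal E1 + indicator Bs u"
      if u: "\<forall>l<n. u l \<in> {0..1}" and us: "u \<in> space (UU n)" for u
    proof (cases "u \<in> Bs")
      case True
      interpret K: prob_space "KK W n u" by (rule prob_KK)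
      have "emeasure (KK W n u) A \<le> 1" by (rule K.emeasure_le_1)
      also have "\<dots> \<le> ennreal E1 + indicator Bs u" using True by simp
      finally show ?thesis .
    next
      case False
      then have H1: "\<bar>(\<Sum>l<n. phi f (dl (u l))) - real n * cc\<bar> < real n * \<tau>'"
        and grid: "\<And>m. m \<le> K \<Longrightarrow> \<bar>(\<Sum>l<n. Wc (real m / real K) (u l)) - real n * dl (real m / real K)\<bar> < real n * \<tau>"
        using us by (auto simp: Bs_def not_le)
      define Sup where "Sup = {g \<in> space (KK W n u). \<exists>i<n. real n * \<tau> \<le> \<bar>deg n g i - (\<Sum>l\<in>{..<n} - {i}. W (u i) (u l))\<bar>}"
      have Sups: "Sup \<in> sets (KK W n u)"
      proof -
        have "Sup = (\<Union>i\<in>{..<n}. {g \<in> space (KK W n u). real n * \<tau> \<le> \<bar>deg n g i - (\<Sum>l\<in>{..<n} - {i}. W (u i) (u l))\<bar>})"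
          by (auto simp: Sup_def)
        also have "\<dots> \<in> sets (KK W n u)"
          using deg_meas_KK[of _ n W u] by (intro sets.finite_UN) (auto intro!: measurable_sets_borel[of _ _ "{_..}"] borel_measurable_abs borel_measurable_diff)
        finally show ?thesis .
      qed
      have sub: "A \<subseteq> Sup"
      proof
        fix g assume gA: "g \<in> A"
        show "g \<in> Sup"
        proof (rule ccontr)
          assume "g \<notin> Sup"
          then have degs: "\<And>i. i < n \<Longrightarrow> \<bar>deg n g i - (\<Sum>l\<in>{..<n} - {i}. W (u i) (u l))\<bar> < real n * \<tau>"
            using gA by (auto simp: Sup_def A_def space_KK not_le)
          have "\<bar>mtrace n (Bm n f g) / real n - cc\<bar> < Kf f / real n + Lphi f * (2 * \<tau> + 1 / real n + 2 * L / real K) + \<tau>'"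
            by (rule combine_det[OF n1 K1 _ grid H1 degs]) (use u in auto)
          then show False using arith gA by (auto simp: A_def)
        qed
      qed
      have "emeasure (KK W n u) A \<le> emeasure (KK W n u) Sup" by (rule emeasure_mono[OF sub Sups])
      also have "\<dots> \<le> ennreal E1" unfolding Sup_def E1_def by (rule kk_bound[OF n2 _ tau]) (use u in auto)
      also have "\<dots> \<le> ennreal E1 + indicator Bs u" by simp
      finally show ?thesis .
    qed
    have "emeasure (graphon_law W n) A \<le> (\<integral>\<^sup>+u. emeasure (KK W n u) A \<partial>UU n)" by (rule graphon_le[OF As])
    also have "\<dots> \<le> (\<integral>\<^sup>+u. ennreal E1 + indicator Bs u \<partial>UU n)"
    proof (rule nn_integral_mono_AE)
      show "AE u in UU n. emeasure (KK W n u) A \<le> ennreal E1 + indicator Bs u"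
        using AE_space AE_UU[of n] by eventually_elim (rule pw, auto)
    qed
    also have "\<dots> = ennreal E1 + emeasure (UU n) Bs"
      using Bss prob_space.emeasure_space_1[OF prob_UU, of n] by (subst nn_integral_add) auto
    also have "\<dots> \<le> ennreal E1 + ennreal (2 * exp (- 2 * (real n * \<tau>')\<^sup>2 / (real n * (Bphi f - - Bphi f)\<^sup>2))
            + real (Suc K) * (2 * exp (- 2 * (real n * \<tau>)\<^sup>2 / (real n * (1 - 0)\<^sup>2))))"
      by (rule add_left_mono[OF Bsm])
    also have "\<dots> \<le> ennreal (2 * (real n + C) * exp (- a * real n))"
    proof -
      have npos: "real n > 0" using n1 by simp
      have ex1: "exp (- 2 * real n * \<tau>\<^sup>2) \<le> exp (- a * real n)"
        using npos by (auto simp: a_def intro!: mult_right_mono)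
      have "- 2 * (real n * \<tau>')\<^sup>2 / (real n * (Bphi f - - Bphi f)\<^sup>2) = - (\<tau>'\<^sup>2 / (2 * (Bphi f)\<^sup>2)) * real n"
        using npos Bp by (simp add: power2_eq_square field_simps)
      moreover have "- (\<tau>'\<^sup>2 / (2 * (Bphi f)\<^sup>2)) * real n \<le> - a * real n"
        using npos by (intro mult_right_mono) (auto simp: a_def)
      ultimately have ex2: "exp (- 2 * (real n * \<tau>')\<^sup>2 / (real n * (Bphi f - - Bphi f)\<^sup>2)) \<le> exp (- a * real n)"
        by simp
      have "- 2 * (real n * \<tau>)\<^sup>2 / (real n * (1 - 0)\<^sup>2) = - 2 * real n * \<tau>\<^sup>2"
        using npos by (simp add: power2_eq_square field_simps)
      then have ex3: "exp (- 2 * (real n * \<tau>)\<^sup>2 / (real n * (1 - 0)\<^sup>2)) \<le> exp (- a * real n)"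
        using ex1 by simp
      define X where "X = 2 * exp (- 2 * (real n * \<tau>')\<^sup>2 / (real n * (Bphi f - - Bphi f)\<^sup>2))
            + real (Suc K) * (2 * exp (- 2 * (real n * \<tau>)\<^sup>2 / (real n * (1 - 0)\<^sup>2)))"
      have nn: "E1 \<ge> 0" "X \<ge> 0" unfolding E1_def X_def by auto
      have "E1 + X
          \<le> real n * (2 * exp (- a * real n)) + (2 * exp (- a * real n) + real (Suc K) * (2 * exp (- a * real n)))"
        unfolding E1_def X_def using ex1 ex2 ex3 by (intro add_mono mult_left_mono) auto
      also have "\<dots> = 2 * (real n + C) * exp (- a * real n)" by (simp add: C_def algebra_simps)
      finally have le: "E1 + X \<le> 2 * (real n + C) * exp (- a * real n)" .
      have "ennreal E1 + ennreal X = ennreal (E1 + X)" by (rule ennreal_plus[symmetric, OF nn])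
      also have "\<dots> \<le> ennreal (2 * (real n + C) * exp (- a * real n))" by (rule ennreal_leI[OF le])
      finally show ?thesis unfolding X_def .
    qed
    finally show ?thesis unfolding A_def .
  qed
  show ?thesis
    by (rule exI[of _ N], rule exI[of _ C], rule exI[of _ a]) (use apos bound in \<open>auto simp: C_def\<close>)
qed

end


lemma summable_exp_poly:
  fixes a C :: real
  assumes a: "a > 0"
  shows "summable (\<lambda>n. 2 * (real n + C) * exp (- a * real n))"
proof (rule summable_comparison_test_bigo)
  show "summable (\<lambda>n. norm (real n powr (-2)))"
    using summable_real_powr_iff[of "-2"] by simp
  show "(\<lambda>n. 2 * (real n + C) * exp (- a * real n)) \<in> O(\<lambda>n. real n powr (-2))"
    using a by real_asymp
qed


lemma sets_sample: "sets (sample_law W n d) = sets (XS n \<Otimes>\<^sub>M gauss_law n d)"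
  unfolding sample_law_def by (rule sets_pair_measure_cong[OF sets_graphon refl])

lemma space_sample: "space (sample_law W n d) = space (XS n) \<times> space (gauss_law n d)"
  unfolding sample_law_def space_pair_measure space_graphon ..

lemma graphon_mass:
  assumes "prob_space (sample_law W n d)"
  shows "emeasure (graphon_law W n) (space (graphon_law W n)) = 1"
proof -
  interpret GA: prob_space "gauss_law n d" by (rule prob_gauss_law)
  have "emeasure (sample_law W n d) (space (graphon_law W n) \<times> space (gauss_law n d))
      = emeasure (graphon_law W n) (space (graphon_law W n)) * emeasure (gauss_law n d) (space (gauss_law n d))"
    unfolding sample_law_def by (rule GA.emeasure_pair_measure_Times) auto
  moreover have "space (graphon_law W n) \<times> space (gauss_law n d) = space (sample_law W n d)"
    by (simp add: sample_law_def space_pair_measure)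
  ultimately show ?thesis using prob_space.emeasure_space_1[OF assms] GA.emeasure_space_1 by simp
qed

lemma div_aux: "(d::real) > 0 \<Longrightarrow> (n::real) > 0 \<Longrightarrow> X / (d * n) - Y / n = (X - d * Y) / (d * n)"
  by (simp add: field_simps)

context gset
begin

lemma gauss_part:
  assumes n: "n \<ge> 1" and d: "d > 0" and t: "t > 0" and P: "prob_space (sample_law W n d)"
  shows "emeasure (sample_law W n d) {x \<in> space (sample_law W n d).
            t \<le> \<bar>h_stat n d f (fst x) (snd x) - mtrace n (Bm n f (fst x)) / real n\<bar>}
         \<le> ennreal (2 * (Rb f)\<^sup>2 / (t\<^sup>2 * real d * real n))"
proof -
  interpret GA: prob_space "gauss_law n d" by (rule prob_gauss_law)
  define E where "E = {x \<in> space (sample_law W n d). t \<le> \<bar>h_stat n d f (fst x) (snd x) - mtrace n (Bm n f (fst x)) / real n\<bar>}"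
  have hm: "(\<lambda>x. h_stat n d f (fst x) (snd x)) \<in> borel_measurable (sample_law W n d)"
    using h_stat_meas[of n d f] by (simp add: measurable_cong_sets[OF sets_sample refl])
  have sm0: "(\<lambda>x. mtrace n (Bm n f (fst x)) / real n) \<in> borel_measurable (XS n \<Otimes>\<^sub>M gauss_law n d)"
    using measurable_compose[OF measurable_fst mtrace_meas[OF Bm_meas[of n f]]] by measurable
  then have sm: "(\<lambda>x. mtrace n (Bm n f (fst x)) / real n) \<in> borel_measurable (sample_law W n d)"
    by (simp add: measurable_cong_sets[OF sets_sample refl])
  have Es: "E \<in> sets (sample_law W n d)" unfolding E_def using hm sm by measurable
  then have Es': "E \<in> sets (graphon_law W n \<Otimes>\<^sub>M gauss_law n d)" by (simp add: sample_law_def)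
  define c where "c = 2 * (Rb f)\<^sup>2 / (t\<^sup>2 * real d * real n)"
  have sec: "emeasure (gauss_law n d) (Pair g -` E) \<le> ennreal c" if g: "g \<in> space (graphon_law W n)" for g
  proof -
    let ?B = "Bm n f g"
    have dn: "real d * real n > 0" using n d by simp
    have "Pair g -` E = {z \<in> space (gauss_law n d). t * (real d * real n) \<le> \<bar>Qf n d ?B z - real d * (\<Sum>i<n. ?B i i)\<bar>}"
    proof -
      have "t \<le> \<bar>h_stat n d f g z - mtrace n ?B / real n\<bar> \<longleftrightarrow> t * (real d * real n) \<le> \<bar>Qf n d ?B z - real d * (\<Sum>i<n. ?B i i)\<bar>" for z
      proof -
        have "h_stat n d f g z - mtrace n ?B / real n = (Qf n d ?B z - real d * (\<Sum>i<n. ?B i i)) / (real d * real n)"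
          unfolding h_stat_formula Qf_def mtrace_def using d n by (rule_tac div_aux) auto
        then have "\<bar>h_stat n d f g z - mtrace n ?B / real n\<bar> = \<bar>Qf n d ?B z - real d * (\<Sum>i<n. ?B i i)\<bar> / (real d * real n)"
          using dn by simp
        then show ?thesis using dn by (simp add: le_divide_eq)
      qed
      then show ?thesis unfolding E_def using g by (auto simp: space_sample space_graphon)
    qed
    also have "emeasure (gauss_law n d) \<dots> \<le> ennreal (2 * real d * (\<Sum>i<n. \<Sum>j<n. (?B i j)\<^sup>2) / (t * (real d * real n))\<^sup>2)"
      using gauss_tail[of "t * (real d * real n)" n d ?B] t dn
      by (simp add: GA.emeasure_eq_measure ennreal_leI)
    also have "\<dots> \<le> ennreal c"
    proof (rule ennreal_leI)
      have "2 * real d * (\<Sum>i<n. \<Sum>j<n. (?B i j)\<^sup>2) \<le> 2 * real d * (real n * (Rb f)\<^sup>2)"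
        using sum_sq_Bm[of n f g] by (intro mult_left_mono) auto
      then have "2 * real d * (\<Sum>i<n. \<Sum>j<n. (?B i j)\<^sup>2) / (t * (real d * real n))\<^sup>2
          \<le> 2 * real d * (real n * (Rb f)\<^sup>2) / (t * (real d * real n))\<^sup>2"
        by (intro divide_right_mono) auto
      also have "\<dots> = c" unfolding c_def using dn t by (simp add: field_simps power2_eq_square)
      finally show "2 * real d * (\<Sum>i<n. \<Sum>j<n. (?B i j)\<^sup>2) / (t * (real d * real n))\<^sup>2 \<le> c" .
    qed
    finally show ?thesis .
  qed
  have "emeasure (sample_law W n d) E = (\<integral>\<^sup>+g. emeasure (gauss_law n d) (Pair g -` E) \<partial>graphon_law W n)"
    unfolding sample_law_def by (rule GA.emeasure_pair_measure_alt[OF Es'])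
  also have "\<dots> \<le> (\<integral>\<^sup>+g. ennreal c \<partial>graphon_law W n)" by (rule nn_integral_mono) (rule sec)
  also have "\<dots> = ennreal c" using graphon_mass[OF P] by simp
  finally show ?thesis unfolding E_def c_def .
qed

lemma graph_transfer:
  assumes P: "prob_space (sample_law W n d)"
  shows "emeasure (sample_law W n d) {x \<in> space (sample_law W n d). t \<le> \<bar>mtrace n (Bm n f (fst x)) / real n - cc\<bar>}
    = emeasure (graphon_law W n) {g \<in> space (XS n). t \<le> \<bar>mtrace n (Bm n f g) / real n - cc\<bar>}"
proof -
  interpret GA: prob_space "gauss_law n d" by (rule prob_gauss_law)
  define A where "A = {g \<in> space (XS n). t \<le> \<bar>mtrace n (Bm n f g) / real n - cc\<bar>}"
  have As: "A \<in> sets (graphon_law W n)"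
    unfolding A_def sets_graphon using mtrace_meas[OF Bm_meas[of n f]] by measurable
  have "{x \<in> space (sample_law W n d). t \<le> \<bar>mtrace n (Bm n f (fst x)) / real n - cc\<bar>} = A \<times> space (gauss_law n d)"
    by (auto simp: space_sample A_def)
  moreover have "emeasure (sample_law W n d) (A \<times> space (gauss_law n d)) = emeasure (graphon_law W n) A"
    unfolding sample_law_def using As by (subst GA.emeasure_pair_measure_Times) (auto simp: GA.emeasure_space_1)
  ultimately show ?thesis unfolding A_def by simp
qed

end


lemma d_summable:
  fixes d :: "nat \<Rightarrow> nat" and \<alpha> c :: real
  assumes alpha: "\<alpha> > 1" and d_pos: "\<And>n. n \<ge> 1 \<Longrightarrow> d n > 0"
    and d_hi: "\<And>n. n \<ge> 1 \<Longrightarrow> real n \<le> real (d n) powr \<alpha>" and c: "c \<ge> 0"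
  shows "summable (\<lambda>n. c / (real (d n) * real n))"
proof (rule summable_comparison_test_ev)
  show "summable (\<lambda>n. c * real n powr (- (1 + 1 / \<alpha>)))"
    using alpha by (intro summable_mult) (simp add: summable_real_powr_iff)
  show "\<forall>\<^sub>F n in sequentially. norm (c / (real (d n) * real n)) \<le> c * real n powr (- (1 + 1 / \<alpha>))"
    unfolding eventually_sequentially
  proof (intro exI[of _ 1] allI impI)
    fix n :: nat assume n: "n \<ge> 1"
    have dp: "real (d n) > 0" using d_pos[OF n] by simp
    have np: "real n > 0" using n by simp
    have "real n powr (1 / \<alpha>) \<le> (real (d n) powr \<alpha>) powr (1 / \<alpha>)"
      using d_hi[OF n] alpha by (intro powr_mono2) auto
    also have "\<dots> = real (d n)" using dp alpha by (simp add: powr_powr)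
    finally have dge: "real n powr (1 / \<alpha>) \<le> real (d n)" .
    have "real n powr (1 + 1 / \<alpha>) = real n * real n powr (1 / \<alpha>)" using np by (simp add: powr_add)
    also have "\<dots> \<le> real n * real (d n)" using dge np by (intro mult_left_mono) auto
    finally have le: "real n powr (1 + 1 / \<alpha>) \<le> real (d n) * real n" by (simp add: mult.commute)
    have pp: "real n powr (1 + 1 / \<alpha>) > 0" using np by simp
    have "c / (real (d n) * real n) \<le> c / real n powr (1 + 1 / \<alpha>)"
      using le pp c dp np by (intro divide_left_mono) auto
    also have "\<dots> = c * real n powr (- (1 + 1 / \<alpha>))" by (simp only: powr_minus divide_inverse)
    finally show "norm (c / (real (d n) * real n)) \<le> c * real n powr (- (1 + 1 / \<alpha>))"
      using c dp np by simp
  qed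
qed

theorem theorem2:
  fixes W :: "real \<Rightarrow> real \<Rightarrow> real" and L \<alpha> :: real and f :: "real poly"
    and d :: "nat \<Rightarrow> nat" and M :: "'a measure"
    and G :: "nat \<Rightarrow> 'a \<Rightarrow> (nat \<times> nat \<Rightarrow> bool)"
    and Z :: "nat \<Rightarrow> 'a \<Rightarrow> (nat \<times> nat \<Rightarrow> real)"
  assumes W_range: "\<And>x y. x \<in> {0..1} \<Longrightarrow> y \<in> {0..1} \<Longrightarrow> W x y \<in> {0..1}"
    and W_sym: "\<And>x y. x \<in> {0..1} \<Longrightarrow> y \<in> {0..1} \<Longrightarrow> W x y = W y x"
    and W_lip: "\<And>x y x' y'. x \<in> {0..1} \<Longrightarrow> y \<in> {0..1} \<Longrightarrow> x' \<in> {0..1} \<Longrightarrow> y' \<in> {0..1} \<Longrightarrow>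
                  \<bar>W x y - W x' y'\<bar> \<le> L * (\<bar>x - x'\<bar> + \<bar>y - y'\<bar>)"
    and alpha: "\<alpha> > 1"
    and d_pos: "\<And>n. n \<ge> 1 \<Longrightarrow> d n > 0"
    and d_lo: "\<And>n. n \<ge> 1 \<Longrightarrow> real (d n) powr (1 / \<alpha>) \<le> real n"
    and d_hi: "\<And>n. n \<ge> 1 \<Longrightarrow> real n \<le> real (d n) powr \<alpha>"
    and M: "prob_space M"
    and meas: "\<And>n. n \<ge> 1 \<Longrightarrow> (\<lambda>\<omega>. (G n \<omega>, Z n \<omega>)) \<in> measurable M (sample_law W n (d n))"
    and law: "\<And>n. n \<ge> 1 \<Longrightarrow> distr M (sample_law W n (d n)) (\<lambda>\<omega>. (G n \<omega>, Z n \<omega>)) = sample_law W n (d n)"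
  shows "AE \<omega> in M. (\<lambda>n. h_stat n (d n) f (G n \<omega>) (Z n \<omega>))
           \<longlonglongrightarrow> (LBINT x=0..1. graphon_degree W x * (poly f (graphon_degree W x))\<^sup>2)"
proof -
  interpret gset W L f by unfold_locales (fact W_range W_sym W_lip)+
  interpret MP: prob_space M by (rule M)
  define T where "T = (\<lambda>n \<omega>. h_stat n (d n) f (G n \<omega>) (Z n \<omega>))"
  have key: "AE \<omega> in M. eventually (\<lambda>n. \<bar>T n \<omega> - cc\<bar> < 2 * t) sequentially" if t: "t > 0" for t
  proof -
    obtain N C a where a: "a > 0" and C: "C \<ge> 0" and gp: "\<And>n. n \<ge> N \<Longrightarrow> emeasure (graphon_law W n)
      {g \<in> space (XS n). t \<le> \<bar>mtrace n (Bm n f g) / real n - cc\<bar>} \<le> ennreal (2 * (real n + C) * exp (- a * real n))"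
      using graph_part[OF t] by blast
    define b where "b n = 2 * (Rb f)\<^sup>2 / (t\<^sup>2 * real (d n) * real n) + 2 * (real n + C) * exp (- a * real n)" for n
    define A where "A n = (if n \<ge> 1 then {\<omega> \<in> space M. 2 * t \<le> \<bar>T n \<omega> - cc\<bar>} else {})" for n
    have Tm: "T n \<in> borel_measurable M" if n: "n \<ge> 1" for n
    proof -
      have "(\<lambda>x. h_stat n (d n) f (fst x) (snd x)) \<in> borel_measurable (sample_law W n (d n))"
        using h_stat_meas[of n "d n" f] by (simp add: measurable_cong_sets[OF sets_sample refl])
      from measurable_compose[OF meas[OF n] this] show ?thesis by (simp add: T_def)
    qed
    have As: "A n \<in> sets M" for n
      using Tm[of n] unfolding A_def by (cases "n \<ge> 1") (auto intro: measurable_sets_borel)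
    have Ab: "measure M (A n) \<le> b n" if n: "n \<ge> max N 1" for n
    proof -
      have n1: "n \<ge> 1" and nN: "n \<ge> N" using n by auto
      let ?SL = "sample_law W n (d n)"
      let ?X = "\<lambda>\<omega>. (G n \<omega>, Z n \<omega>)"
      have P: "prob_space ?SL" using MP.prob_space_distr[OF meas[OF n1]] law[OF n1] by simp
      define E1 where "E1 = {x \<in> space ?SL. t \<le> \<bar>h_stat n (d n) f (fst x) (snd x) - mtrace n (Bm n f (fst x)) / real n\<bar>}"
      define E2 where "E2 = {x \<in> space ?SL. t \<le> \<bar>mtrace n (Bm n f (fst x)) / real n - cc\<bar>}"
      have hm: "(\<lambda>x. h_stat n (d n) f (fst x) (snd x)) \<in> borel_measurable ?SL"
        using h_stat_meas[of n "d n" f] by (simp add: measurable_cong_sets[OF sets_sample refl])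
      have sm0: "(\<lambda>x. mtrace n (Bm n f (fst x)) / real n) \<in> borel_measurable (XS n \<Otimes>\<^sub>M gauss_law n (d n))"
        using measurable_compose[OF measurable_fst mtrace_meas[OF Bm_meas[of n f]]] by measurable
      then have sm: "(\<lambda>x. mtrace n (Bm n f (fst x)) / real n) \<in> borel_measurable ?SL"
        by (simp add: measurable_cong_sets[OF sets_sample refl])
      have E1s: "E1 \<in> sets ?SL" unfolding E1_def using hm sm by measurable
      have E2s: "E2 \<in> sets ?SL" unfolding E2_def using sm by measurable
      have sub: "A n \<subseteq> ?X -` (E1 \<union> E2) \<inter> space M"
      proof
        fix \<omega> assume w: "\<omega> \<in> A n"
        then have ws: "\<omega> \<in> space M" and big: "2 * t \<le> \<bar>T n \<omega> - cc\<bar>" using n1 by (auto simp: A_def)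
        have Xs: "?X \<omega> \<in> space ?SL" using measurable_space[OF meas[OF n1] ws] .
        show "\<omega> \<in> ?X -` (E1 \<union> E2) \<inter> space M"
          using Xs ws big by (auto simp: E1_def E2_def T_def)
      qed
      have "emeasure M (A n) \<le> emeasure M (?X -` (E1 \<union> E2) \<inter> space M)"
        using sub E1s E2s meas[OF n1] by (intro emeasure_mono) auto
      also have "\<dots> = emeasure (distr M ?SL ?X) (E1 \<union> E2)"
        using E1s E2s meas[OF n1] by (subst emeasure_distr) auto
      also have "\<dots> = emeasure ?SL (E1 \<union> E2)" using law[OF n1] by simp
      also have "\<dots> \<le> emeasure ?SL E1 + emeasure ?SL E2" using E1s E2s by (rule emeasure_subadditive)
      also have "\<dots> \<le> ennreal (2 * (Rb f)\<^sup>2 / (t\<^sup>2 * real (d n) * real n)) + ennreal (2 * (real n + C) * exp (- a * real n))"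
      proof (rule add_mono)
        show "emeasure ?SL E1 \<le> ennreal (2 * (Rb f)\<^sup>2 / (t\<^sup>2 * real (d n) * real n))"
          unfolding E1_def by (rule gauss_part[OF n1 d_pos[OF n1] t P])
        show "emeasure ?SL E2 \<le> ennreal (2 * (real n + C) * exp (- a * real n))"
          unfolding E2_def graph_transfer[OF P] by (rule gp[OF nN])
      qed
      also have "\<dots> = ennreal (b n)" unfolding b_def using C by (subst ennreal_plus) auto
      finally have "ennreal (measure M (A n)) \<le> ennreal (b n)" by (simp add: MP.emeasure_eq_measure)
      moreover have "b n \<ge> 0" unfolding b_def using C by auto
      ultimately show ?thesis by (simp add: ennreal_le_iff)
    qed
    have sb: "summable b"
      unfolding b_def
    proof (rule summable_add)
      have "summable (\<lambda>n. (2 * (Rb f)\<^sup>2 / t\<^sup>2) / (real (d n) * real n))"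
        by (rule d_summable[OF alpha d_pos d_hi]) auto
      then show "summable (\<lambda>n. 2 * (Rb f)\<^sup>2 / (t\<^sup>2 * real (d n) * real n))"
        by (simp add: field_simps)
      show "summable (\<lambda>n. 2 * (real n + C) * exp (- a * real n))" by (rule summable_exp_poly[OF a])
    qed
    have sA: "summable (\<lambda>n. measure M (A n))"
    proof (rule summable_comparison_test_ev[OF _ sb])
      show "\<forall>\<^sub>F n in sequentially. norm (measure M (A n)) \<le> b n"
        unfolding eventually_sequentially by (intro exI[of _ "max N 1"]) (auto intro: Ab)
    qed
    have "AE \<omega> in M. eventually (\<lambda>n. \<omega> \<in> space M - A n) sequentially"
      by (rule borel_cantelli_AE1[OF As _ sA]) (simp add: MP.emeasure_eq_measure)
    then show ?thesis
    proof (rule eventually_mono)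
      fix \<omega> assume "eventually (\<lambda>n. \<omega> \<in> space M - A n) sequentially"
      moreover have "eventually (\<lambda>n. n \<ge> 1) sequentially" by (rule eventually_ge_at_top)
      ultimately show "eventually (\<lambda>n. \<bar>T n \<omega> - cc\<bar> < 2 * t) sequentially"
        by eventually_elim (auto simp: A_def not_le)
    qed
  qed
  have "AE \<omega> in M. \<forall>k::nat. eventually (\<lambda>n. \<bar>T n \<omega> - cc\<bar> < 2 * (1 / real (Suc k))) sequentially"
    by (subst AE_all_countable) (intro allI, rule key, simp)
  then have "AE \<omega> in M. (\<lambda>n. T n \<omega>) \<longlonglongrightarrow> cc"
  proof (rule eventually_mono)
    fix \<omega> assume ev: "\<forall>k::nat. eventually (\<lambda>n. \<bar>T n \<omega> - cc\<bar> < 2 * (1 / real (Suc k))) sequentially"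
    show "(\<lambda>n. T n \<omega>) \<longlonglongrightarrow> cc"
    proof (rule tendstoI)
      fix e :: real assume e: "e > 0"
      obtain k where k: "1 / real (Suc k) < e / 2" using nat_approx_posE[of "e / 2"] e by auto
      show "eventually (\<lambda>n. dist (T n \<omega>) cc < e) sequentially"
        using ev[rule_format, of k] by eventually_elim (use k in \<open>auto simp: dist_real_def\<close>)
    qed
  qed
  then show ?thesis by (simp add: T_def cc_def)
qed


end
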